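(* Let $\mathbb{H}$ be a real-valued function on classical channels (between finite alphabets) that is monotone under classical channel majorization ($\mathcal{N}\succ\mathcal{M}\Rightarrow\mathbb{H}(\mathcal{N})\le\mathbb{H}(\mathcal{M})$), additive under tensor products, and equal to the Shannon entropy $H$ on probability vectors (channels with trivial input). Then for every classical channel $\mathcal{N}$ from $X$ ($|X|=m$) to $Y$ with columns $\mathbf{p}_x=\mathcal{N}(\mathbf{e}_x)$, $$\mathbb{H}(Y|X)_{\mathcal{N}}=\underline{H}^{\mathrm{reg}}(Y|X)_{\mathcal{N}}=\overline{H}(Y|X)_{\mathcal{N}}=\min_{x\in[m]}H(\mathbf{p}_x).$$
   Context: $H(\mathbf{p})=-\sum_ip_i\log p_i$. Vector majorization $\mathbf{p}\succ\mathbf{q}$: the sum of the $k$ largest entries of $\mathbf{p}$ is at least that of $\mathbf{q}$ for all $k$ (vectors of different lengths compared after zero-padding). Classical channels are column-stochastic matrices; $\mathcal{N}\otimes\mathcal{M}$ has columns $\mathcal{N}(\mathbf{e}_x)\otimes\mathcal{M}(\mathbf{e}_{x'})$. Classical channel majorization (same output $Y$): $\mathcal{N}\succ\mathcal{M}$ iff $\mathcal{M}=\mathcal{D}^{YZ\to Y}\circ(\mathcal{N}\otimes\mathrm{id}^Z)\circ\mathcal{S}^{X'\to XZ}$ for a finite classical system $Z$ and classical channels $\mathcal{S},\mathcal{D}$ with $\mathcal{D}(\cdot\otimes\mathbf{e}_z)$ doubly stochastic for all $z$; channels with different output sizes are compared after padding the smaller outputs with zeros. For a probability vector $\mathbf{q}$,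 $\mathbf{q}\succ\mathcal{N}$ means $\mathbf{q}\succ\mathbf{p}_x$ for all $x$. Maximal extension: $\overline{H}(Y|X)_{\mathcal{N}}:=\inf\{H(\mathbf{q}):\mathcal{N}\succ\mathbf{q}\}$; minimal extension: $\underline{H}(Y|X)_{\mathcal{N}}:=\sup\{H(\mathbf{q}):\mathbf{q}\succ\mathcal{N}\}$ (over probability vectors of arbitrary finite length); regularized minimal extension: $\underline{H}^{\mathrm{reg}}(Y|X)_{\mathcal{N}}:=\lim_{k\to\infty}\frac1k\underline{H}(Y^k|X^k)_{\mathcal{N}^{\otimes k}}$. *)

theory Defs
  imports Complex_Main
begin

text \<open>A classical channel from an alphabet of size m to an alphabet of size n is
 represented as a triple (m, n, W) where W y x is the probability of output y given
 input x (column-stochastic n x m matrix), with all entries outside the range set to 0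
 (so that zero-padding of outputs is automatic).\<close>

type_synonym chan = "nat \<times> nat \<times> (nat \<Rightarrow> nat \<Rightarrow> real)"

definition is_channel :: "chan \<Rightarrow> bool" where
  "is_channel C = (case C of (m, n, W) \<Rightarrow>
     m \<ge> 1 \<and> (\<forall>x<m. \<forall>y<n. W y x \<ge> 0) \<and> (\<forall>x<m. (\<Sum>y<n. W y x) = 1)
     \<and> (\<forall>x y. (x \<ge> m \<or> y \<ge> n) \<longrightarrow> W y x = 0))"

definition prob_vec :: "nat \<Rightarrow> (nat \<Rightarrow> real) \<Rightarrow> bool" where
  "prob_vec n p = ((\<forall>i<n. p i \<ge> 0) \<and> (\<Sum>i<n. p i) = 1 \<and> (\<forall>i\<ge>n. p i = 0))"

definition entropy :: "nat \<Rightarrow> (nat \<Rightarrow> real) \<Rightarrow> real" where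
  "entropy n p = - (\<Sum>i<n. (if p i = 0 then 0 else p i * log 2 (p i)))"

definition vec_chan :: "nat \<Rightarrow> (nat \<Rightarrow> real) \<Rightarrow> chan" where
  "vec_chan n p = (1, n, (\<lambda>y x. if x = 0 then p y else 0))"

text \<open>Tensor product; index (a,b) is encoded as a * (size of second) + b.\<close>
definition tensor :: "chan \<Rightarrow> chan \<Rightarrow> chan" where
  "tensor C1 C2 = (case C1 of (m1, n1, N1) \<Rightarrow> case C2 of (m2, n2, N2) \<Rightarrow>
     (m1 * m2, n1 * n2, (\<lambda>y x. if y < n1 * n2 \<and> x < m1 * m2
        then N1 (y div n2) (x div m2) * N2 (y mod n2) (x mod m2) else 0)))"

definition triv_chan :: chan where
  "triv_chan = (1, 1, (\<lambda>y x. if y = 0 \<and> x = 0 then 1 else 0))"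

fun tpow :: "chan \<Rightarrow> nat \<Rightarrow> chan" where
  "tpow C 0 = triv_chan"
| "tpow C (Suc k) = tensor C (tpow C k)"

definition topsum :: "nat \<Rightarrow> (nat \<Rightarrow> real) \<Rightarrow> nat \<Rightarrow> real" where
  "topsum n p k = Max ((\<lambda>S. \<Sum>i\<in>S. p i) ` {S. S \<subseteq> {..<n} \<and> card S = k})"

definition vec_maj :: "nat \<Rightarrow> (nat \<Rightarrow> real) \<Rightarrow> nat \<Rightarrow> (nat \<Rightarrow> real) \<Rightarrow> bool" where
  "vec_maj n p n' q = (\<forall>k \<le> max n n'. topsum (max n n') q k \<le> topsum (max n n') p k)"

text \<open>Classical channel majorization N \<succ> M: after padding both outputs to size
  k = max n n', M = D o (N \<otimes> id_Z) o S with |Z| = l, S a channel X' \<rightarrow> X \<times> Z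
  (index x*l+z), and D(\<cdot> \<otimes> e_z) doubly stochastic for every z (index y0*l+z).\<close>
definition chan_maj :: "chan \<Rightarrow> chan \<Rightarrow> bool" where
  "chan_maj C1 C2 = (case C1 of (m, n, N) \<Rightarrow> case C2 of (m', n', M) \<Rightarrow>
     (let k = max n n' in
      \<exists>l::nat. \<exists>S D :: nat \<Rightarrow> nat \<Rightarrow> real. l \<ge> 1 \<and>
        is_channel (m', m * l, S) \<and>
        (\<forall>z<l. (\<forall>y<k. \<forall>y0<k. D y (y0 * l + z) \<ge> 0)
              \<and> (\<forall>y0<k. (\<Sum>y<k. D y (y0 * l + z)) = 1)
              \<and> (\<forall>y<k. (\<Sum>y0<k. D y (y0 * l + z)) = 1)) \<and>
        (\<forall>y<k. \<forall>x'<m'. M y x' =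
            (\<Sum>x<m. \<Sum>z<l. \<Sum>y0<k. D y (y0 * l + z) * N y0 x * S (x * l + z) x'))))"

definition Hmin :: "chan \<Rightarrow> real" where
  "Hmin C = (case C of (m, n, W) \<Rightarrow>
     Sup {entropy n' q | n' q. prob_vec n' q \<and> (\<forall>x<m. vec_maj n' q n (\<lambda>y. W y x))})"

definition Hmax :: "chan \<Rightarrow> real" where
  "Hmax C = Inf {entropy n' q | n' q. prob_vec n' q \<and> chan_maj C (vec_chan n' q)}"

end

theory Submission
  imports Defs
begin


lemma sum_shift_ivl: "(\<Sum>y\<in>{a..<a+k}. g y) = (\<Sum>j<k. g (a + j::nat))"
proof -
  have "(\<Sum>y\<in>{0+a..<k+a}. g y) = (\<Sum>j\<in>{0..<k}. g (j + a))"
    by (rule sum.shift_bounds_nat_ivl)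
  then show ?thesis by (simp add: atLeast0LessThan add.commute)
qed

lemma sum_prod_idx:
  fixes g :: "nat \<Rightarrow> 'a::comm_monoid_add"
  shows "(\<Sum>y<n1*n2. g y) = (\<Sum>i<n1. \<Sum>j<n2. g (i*n2 + j))"
proof -
  have "(\<Sum>y<n1*n2. g y) = (\<Sum>i<n1. \<Sum>y\<in>{i*n2..<i*n2+n2}. g y)"
    using sum.nat_group[of g n2 n1] by simp
  also have "\<dots> = (\<Sum>i<n1. \<Sum>j<n2. g (i*n2 + j))"
    by (simp only: sum_shift_ivl)
  finally show ?thesis .
qed

lemma sum_divmod:
  fixes f :: "nat \<Rightarrow> nat \<Rightarrow> 'a::comm_monoid_add"
  assumes "n2 > 0"
  shows "(\<Sum>y<n1*n2. f (y div n2) (y mod n2)) = (\<Sum>i<n1. \<Sum>j<n2. f i j)"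
  unfolding sum_prod_idx using assms by (intro sum.cong refl) simp



lemma is_channelD:
  assumes "is_channel (m, n, W)"
  shows "m \<ge> 1" "\<And>x y. x < m \<Longrightarrow> y < n \<Longrightarrow> W y x \<ge> 0"
    "\<And>x. x < m \<Longrightarrow> (\<Sum>y<n. W y x) = 1"
    "\<And>x y. x \<ge> m \<or> y \<ge> n \<Longrightarrow> W y x = 0"
  using assms unfolding is_channel_def by auto

lemma is_channel_nonneg:
  assumes "is_channel (m, n, W)" shows "W y x \<ge> 0"
  using is_channelD[OF assms] by (cases "x < m \<and> y < n") auto

lemma is_channel_le1:
  assumes "is_channel (m, n, W)" shows "W y x \<le> 1"
proof (cases "x < m \<and> y < n")
  case True
  have "W y x \<le> (\<Sum>y'<n. W y' x)"
    using True is_channel_nonneg[OF assms] by (intro member_le_sum) auto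
  then show ?thesis using is_channelD(3)[OF assms] True by simp
next
  case False then show ?thesis using is_channelD(4)[OF assms] by force
qed

lemma n_pos: assumes "is_channel (m, n, W)" shows "n > 0"
  using is_channelD(1)[OF assms] is_channelD(3)[OF assms, of 0] by (cases n) auto

lemma tensor_eq: "tensor (m1,n1,N1) (m2,n2,N2) = (m1*m2, n1*n2, (\<lambda>y x. if y < n1 * n2 \<and> x < m1 * m2
        then N1 (y div n2) (x div m2) * N2 (y mod n2) (x mod m2) else 0))"
  unfolding tensor_def by simp

lemma tensor_colsum:
  fixes N1 N2 :: "nat \<Rightarrow> nat \<Rightarrow> real" and f :: "real \<Rightarrow> real"
  assumes "n2 > 0"
  shows "(\<Sum>y<n1*n2. f (N1 (y div n2) a * N2 (y mod n2) b)) = (\<Sum>i<n1. \<Sum>j<n2. f (N1 i a * N2 j b))"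
  using sum_divmod[OF assms, of "\<lambda>i j. f (N1 i a * N2 j b)" n1] by simp

lemma is_channel_tensor:
  assumes c1: "is_channel (m1,n1,N1)" and c2: "is_channel (m2,n2,N2)"
  shows "is_channel (tensor (m1,n1,N1) (m2,n2,N2))"
proof -
  have n2: "n2 > 0" using n_pos[OF c2] .
  have m2: "m2 > 0" using is_channelD(1)[OF c2] by simp
  { fix x assume x: "x < m1*m2"
    then have a: "x div m2 < m1" by (simp add: less_mult_imp_div_less)
    have b: "x mod m2 < m2" using m2 by simp
    have "(\<Sum>y<n1*n2. (if y < n1 * n2 \<and> x < m1 * m2
        then N1 (y div n2) (x div m2) * N2 (y mod n2) (x mod m2) else 0))
       = (\<Sum>y<n1*n2. N1 (y div n2) (x div m2) * N2 (y mod n2) (x mod m2))"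
      using x by (intro sum.cong) auto
    also have "\<dots> = (\<Sum>i<n1. \<Sum>j<n2. N1 i (x div m2) * N2 j (x mod m2))"
      using tensor_colsum[OF n2, of id] by simp
    also have "\<dots> = (\<Sum>i<n1. N1 i (x div m2)) * (\<Sum>j<n2. N2 j (x mod m2))"
      by (simp add: sum_product)
    also have "\<dots> = 1" using is_channelD(3)[OF c1 a] is_channelD(3)[OF c2 b] by simp
    finally have "(\<Sum>y<n1*n2. (if y < n1 * n2 \<and> x < m1 * m2
        then N1 (y div n2) (x div m2) * N2 (y mod n2) (x mod m2) else 0)) = 1" .
  }
  moreover have "m1*m2 \<ge> 1" using is_channelD(1)[OF c1] is_channelD(1)[OF c2] by simp
  ultimately show ?thesis unfolding tensor_eq is_channel_def
    using is_channel_nonneg[OF c1] is_channel_nonneg[OF c2] by auto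
qed

lemma triv_eq: "triv_chan = vec_chan 1 (\<lambda>y. if y = 0 then 1 else 0)"
  unfolding triv_chan_def vec_chan_def by auto

lemma prob_vec_chan: "prob_vec k p \<Longrightarrow> is_channel (vec_chan k p)"
  unfolding prob_vec_def vec_chan_def is_channel_def by auto

lemma prob_vec_delta: "prob_vec 1 (\<lambda>y. if y = 0 then 1 else 0)"
  unfolding prob_vec_def by auto

lemma is_channel_triv: "is_channel triv_chan"
  unfolding triv_eq by (rule prob_vec_chan[OF prob_vec_delta])

definition mat :: "chan \<Rightarrow> nat \<Rightarrow> nat \<Rightarrow> real" where "mat C = snd (snd C)"

lemma tpow_fst: "fst (tpow (m,n,W) k) = m^k \<and> fst (snd (tpow (m,n,W) k)) = n^k"
proof (induction k)
  case 0 then show ?case by (simp add: triv_chan_def)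
next
  case (Suc k)
  obtain a b M where e: "tpow (m,n,W) k = (a,b,M)" by (metis prod_cases3)
  show ?case using Suc e by (simp add: tensor_eq)
qed

lemma tpow_shape: "tpow (m,n,W) k = (m^k, n^k, mat (tpow (m,n,W) k))"
  using tpow_fst[of m n W k] unfolding mat_def by (metis prod.collapse)

lemma mat_tensor: "mat (tensor (m,n,W) (m2, n2, M)) = (\<lambda>y x. if y < n * n2 \<and> x < m * m2
        then W (y div n2) (x div m2) * M (y mod n2) (x mod m2) else 0)"
  by (simp add: tensor_eq mat_def)

lemma tpow_Suc_mat: "mat (tpow (m,n,W) (Suc k)) = (\<lambda>y x. if y < n * n^k \<and> x < m * m^k
        then W (y div n^k) (x div m^k) * mat (tpow (m,n,W) k) (y mod n^k) (x mod m^k) else 0)"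
proof -
  have "tpow (m,n,W) (Suc k) = tensor (m,n,W) (m^k, n^k, mat (tpow (m,n,W) k))"
    using tpow_shape[of m n W k] by (metis tpow.simps(2))
  then show ?thesis by (simp only: mat_tensor)
qed

lemma is_channel_tpow:
  assumes "is_channel (m,n,W)"
  shows "is_channel (m^k, n^k, mat (tpow (m,n,W) k))"
proof (induction k)
  case 0 then show ?case using is_channel_triv tpow_shape[of m n W 0] by simp
next
  case (Suc k)
  have "is_channel (tensor (m,n,W) (m^k, n^k, mat (tpow (m,n,W) k)))"
    by (rule is_channel_tensor[OF assms Suc])
  then show ?case using tpow_shape[of m n W "Suc k"] tpow_shape[of m n W k] by simp
qed

lemma HH_tpow:
  fixes HH :: "chan \<Rightarrow> real"
  assumes additive: "\<And>C1 C2. is_channel C1 \<Longrightarrow> is_channel C2 \<Longrightarrow> HH (tensor C1 C2) = HH C1 + HH C2"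
    and norm: "\<And>k p. prob_vec k p \<Longrightarrow> HH (vec_chan k p) = entropy k p"
    and chan: "is_channel (m, n, W)"
  shows "HH (tpow (m,n,W) k) = real k * HH (m,n,W)"
proof (induction k)
  case 0
  have "entropy 1 (\<lambda>y. if y = 0 then 1 else 0) = 0" unfolding entropy_def by simp
  then show ?case using norm[OF prob_vec_delta] by (simp add: triv_eq)
next
  case (Suc k)
  have "HH (tpow (m,n,W) (Suc k)) = HH (m,n,W) + HH (tpow (m,n,W) k)"
    using additive[OF chan is_channel_tpow[OF chan, of k]] tpow_shape[of m n W k] by simp
  then show ?case using Suc by (simp add: algebra_simps)
qed



lemma entropy_ln: "entropy n p = - (\<Sum>i<n. p i * ln (p i)) / ln 2"
  unfolding entropy_def log_def by (simp add: sum_divide_distrib, intro sum.cong) auto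

lemma entropy_pad:
  fixes n k :: nat
  assumes "\<And>i. i \<ge> n \<Longrightarrow> p i = 0" "n \<le> k"
  shows "(\<Sum>i<k. p i * ln (p i)) = (\<Sum>i<n. p i * ln (p i))"
  using assms by (intro sum.mono_neutral_right) (auto simp: not_less)

lemma xlnx_nonpos: "(0::real) \<le> x \<Longrightarrow> x \<le> 1 \<Longrightarrow> x * ln x \<le> 0"
proof (cases "x = 0")
  case False
  assume "0 \<le> x" "x \<le> 1"
  then have "ln x \<le> 0" using False by (simp add: ln_le_zero_iff)
  then show ?thesis using \<open>0 \<le> x\<close> by (simp add: mult_nonneg_nonpos)
qed simp

lemma entropy_nonneg:
  assumes "\<And>i. i < n \<Longrightarrow> 0 \<le> p i \<and> p i \<le> 1"
  shows "entropy n p \<ge> 0"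
proof -
  have "(\<Sum>i<n. p i * ln (p i)) \<le> 0" using assms xlnx_nonpos by (intro sum_nonpos) auto
  then show ?thesis unfolding entropy_ln by (simp add: divide_nonpos_pos)
qed

lemma log_sum_point:
  fixes a b A B :: real
  assumes "a \<ge> 0" "b \<ge> 0" "b = 0 \<longrightarrow> a = 0" "A \<ge> a" "B > 0"
  shows "a * ln (A / B) - a * ln (a / b) \<le> b * A / B - a"
proof (cases "a = 0")
  case True then show ?thesis using assms by simp
next
  case False
  then have a: "a > 0" and b: "b > 0" and A: "A > 0" using assms by auto
  have "a * ln (A / B) - a * ln (a / b) = a * ln ((A * b) / (B * a))"
    using a b A assms(5) by (simp add: ln_div ln_mult algebra_simps)
  also have "\<dots> \<le> a * ((A * b) / (B * a) - 1)"
    using a b A assms(5) by (intro mult_left_mono ln_le_minus_one) auto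
  also have "\<dots> = b * A / B - a" using a by (simp add: field_simps)
  finally show ?thesis .
qed

lemma log_sum:
  fixes a b :: "'i \<Rightarrow> real"
  assumes fin: "finite I" and nn: "\<And>i. i \<in> I \<Longrightarrow> a i \<ge> 0 \<and> b i \<ge> 0 \<and> (b i = 0 \<longrightarrow> a i = 0)"
    and B: "sum b I > 0"
  shows "sum a I * ln (sum a I / sum b I) \<le> (\<Sum>i\<in>I. a i * ln (a i / b i))"
proof -
  have "(\<Sum>i\<in>I. a i * ln (sum a I / sum b I) - a i * ln (a i / b i))
        \<le> (\<Sum>i\<in>I. b i * sum a I / sum b I - a i)"
  proof (intro sum_mono log_sum_point)
    fix i assume i: "i \<in> I"
    then show "a i \<ge> 0" "b i \<ge> 0" "b i = 0 \<longrightarrow> a i = 0" using nn by auto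
    show "sum a I \<ge> a i" using i nn fin by (intro member_le_sum) auto
  qed (use B in auto)
  also have "\<dots> = 0" using B by (simp add: sum_subtractf sum_divide_distrib[symmetric] sum_distrib_right[symmetric])
  finally show ?thesis by (simp add: sum_subtractf sum_distrib_right[symmetric])
qed



lemma sum3: "(\<Sum>(x,z,y0)\<in>A \<times> B \<times> C. g x z y0) = (\<Sum>x\<in>A. \<Sum>z\<in>B. \<Sum>y0\<in>C. (g x z y0 :: real))"
  by (simp add: sum.cartesian_product)

lemma chan_maj_vecD:
  assumes "chan_maj (m,n,W) (vec_chan n' q)"
  shows "\<exists>l S D. l \<ge> 1 \<and> is_channel (1, m * l, S) \<and>
        (\<forall>z<l. (\<forall>y<max n n'. \<forall>y0<max n n'. D y (y0 * l + z) \<ge> 0)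
              \<and> (\<forall>y0<max n n'. (\<Sum>y<max n n'. D y (y0 * l + z)) = 1)
              \<and> (\<forall>y<max n n'. (\<Sum>y0<max n n'. D y (y0 * l + z)) = 1)) \<and>
        (\<forall>y<max n n'. q y =
            (\<Sum>x<m. \<Sum>z<l. \<Sum>y0<max n n'. D y (y0 * l + z) * W y0 x * S (x * l + z) 0))"
  using assms unfolding chan_maj_def vec_chan_def Let_def by auto

lemma maj_entropy_lower:
  assumes chan: "is_channel (m,n,W)" and maj: "chan_maj (m,n,W) (vec_chan n' q)"
    and pv: "prob_vec n' q" and hx: "\<And>x. x < m \<Longrightarrow> h \<le> entropy n (\<lambda>y. W y x)"
  shows "h \<le> entropy n' q"
proof -
  define k where "k = max n n'"
  obtain l S D where l: "l \<ge> 1" and S: "is_channel (1, m * l, S)"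
    and Dc: "\<And>z. z < l \<Longrightarrow> (\<forall>y<k. \<forall>y0<k. D y (y0 * l + z) \<ge> 0)
              \<and> (\<forall>y0<k. (\<Sum>y<k. D y (y0 * l + z)) = 1)
              \<and> (\<forall>y<k. (\<Sum>y0<k. D y (y0 * l + z)) = 1)"
    and qe: "\<And>y. y < k \<Longrightarrow> q y =
            (\<Sum>x<m. \<Sum>z<l. \<Sum>y0<k. D y (y0 * l + z) * W y0 x * S (x * l + z) 0)"
    using chan_maj_vecD[OF maj] unfolding k_def by blast
  have Ssum: "(\<Sum>x<m. \<Sum>z<l. S (x * l + z) 0) = 1"
    using is_channelD(3)[OF S, of 0] sum_prod_idx[of "\<lambda>i. S i 0" m l] by simp
  have Snn: "\<And>i. S i 0 \<ge> 0" using is_channel_nonneg[OF S] .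
  have Wnn: "\<And>y x. W y x \<ge> 0" using is_channel_nonneg[OF chan] .
  define I where "I = {..<m} \<times> {..<l} \<times> {..<k}"
  have step: "q y * ln (q y) \<le> (\<Sum>x<m. \<Sum>z<l. \<Sum>y0<k. D y (y0 * l + z) * W y0 x * S (x * l + z) 0 * ln (W y0 x))"
    if y: "y < k" for y
  proof -
    define a where "a = (\<lambda>(x,z,y0). D y (y0 * l + z) * W y0 x * S (x * l + z) 0)"
    define b where "b = (\<lambda>(x,z,y0). D y (y0 * l + z) * S (x * l + z) 0)"
    have sa: "sum a I = q y" unfolding a_def I_def sum3 using qe[OF y] by simp
    have "sum b I = (\<Sum>x<m. \<Sum>z<l. S (x * l + z) 0 * (\<Sum>y0<k. D y (y0 * l + z)))"
      unfolding b_def I_def sum3 by (simp add: sum_distrib_left mult.commute)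
    also have "\<dots> = (\<Sum>x<m. \<Sum>z<l. S (x * l + z) 0)"
      using Dc y by (intro sum.cong refl) simp
    finally have sb: "sum b I = 1" using Ssum by simp
    have nn: "\<And>i. i \<in> I \<Longrightarrow> a i \<ge> 0 \<and> b i \<ge> 0 \<and> (b i = 0 \<longrightarrow> a i = 0)"
      unfolding I_def a_def b_def using Dc y Snn Wnn by auto
    have "sum a I * ln (sum a I / sum b I) \<le> (\<Sum>i\<in>I. a i * ln (a i / b i))"
      by (rule log_sum) (use nn sb I_def in auto)
    also have "(\<Sum>i\<in>I. a i * ln (a i / b i)) = (\<Sum>(x,z,y0)\<in>I. D y (y0 * l + z) * W y0 x * S (x * l + z) 0 * ln (W y0 x))"
      unfolding a_def b_def by (intro sum.cong refl) auto
    finally show ?thesis using sa sb unfolding I_def sum3 by simp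
  qed
  have "(\<Sum>y<k. q y * ln (q y)) \<le> (\<Sum>y<k. \<Sum>x<m. \<Sum>z<l. \<Sum>y0<k. D y (y0 * l + z) * W y0 x * S (x * l + z) 0 * ln (W y0 x))"
    using step by (intro sum_mono) auto
  also have "\<dots> = (\<Sum>x<m. \<Sum>z<l. \<Sum>y0<k. \<Sum>y<k. D y (y0 * l + z) * W y0 x * S (x * l + z) 0 * ln (W y0 x))"
  proof -
    have "(\<Sum>y<k. \<Sum>x<m. \<Sum>z<l. \<Sum>y0<k. D y (y0 * l + z) * W y0 x * S (x * l + z) 0 * ln (W y0 x))
       = (\<Sum>x<m. \<Sum>y<k. \<Sum>z<l. \<Sum>y0<k. D y (y0 * l + z) * W y0 x * S (x * l + z) 0 * ln (W y0 x))"
      by (rule sum.swap)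
    also have "\<dots> = (\<Sum>x<m. \<Sum>z<l. \<Sum>y<k. \<Sum>y0<k. D y (y0 * l + z) * W y0 x * S (x * l + z) 0 * ln (W y0 x))"
      by (rule sum.cong[OF refl], rule sum.swap)
    also have "\<dots> = (\<Sum>x<m. \<Sum>z<l. \<Sum>y0<k. \<Sum>y<k. D y (y0 * l + z) * W y0 x * S (x * l + z) 0 * ln (W y0 x))"
      by (rule sum.cong[OF refl], rule sum.cong[OF refl], rule sum.swap)
    finally show ?thesis .
  qed
  also have "\<dots> = (\<Sum>x<m. \<Sum>z<l. S (x * l + z) 0 * (\<Sum>y0<k. W y0 x * ln (W y0 x) * (\<Sum>y<k. D y (y0 * l + z))))"
    by (simp add: sum_distrib_left sum_distrib_right mult.commute mult.left_commute)
  also have "\<dots> = (\<Sum>x<m. \<Sum>z<l. S (x * l + z) 0 * (\<Sum>y0<k. W y0 x * ln (W y0 x)))"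
    using Dc by (intro sum.cong refl) simp
  also have "\<dots> \<le> (\<Sum>x<m. \<Sum>z<l. S (x * l + z) 0 * (- h * ln 2))"
  proof (intro sum_mono mult_left_mono Snn)
    fix x assume x: "x \<in> {..<m}"
    have "(\<Sum>y0<k. W y0 x * ln (W y0 x)) = (\<Sum>y0<n. W y0 x * ln (W y0 x))"
      unfolding k_def by (rule entropy_pad) (use is_channelD(4)[OF chan] in auto)
    also have "\<dots> = - entropy n (\<lambda>y. W y x) * ln 2" unfolding entropy_ln by simp
    also have "\<dots> \<le> - h * ln 2" using hx x by simp
    finally show "(\<Sum>y0<k. W y0 x * ln (W y0 x)) \<le> - h * ln 2" .
  qed
  also have "\<dots> = (\<Sum>x<m. \<Sum>z<l. S (x * l + z) 0) * (- h * ln 2)"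
    by (simp only: sum_distrib_right)
  also have "\<dots> = - h * ln 2" using Ssum by simp
  finally have A: "(\<Sum>y<k. q y * ln (q y)) \<le> - h * ln 2" .
  have "(\<Sum>y<k. q y * ln (q y)) = (\<Sum>y<n'. q y * ln (q y))"
    unfolding k_def by (rule entropy_pad) (use pv in \<open>auto simp: prob_vec_def\<close>)
  then show ?thesis using A unfolding entropy_ln by (simp add: field_simps)
qed



lemma col_prob_vec:
  assumes "is_channel (m,n,W)" "x < m"
  shows "prob_vec n (\<lambda>y. W y x)"
  using is_channelD[OF assms(1)] assms(2) unfolding prob_vec_def by auto

lemma chan_maj_col:
  assumes chan: "is_channel (m,n,W)" and xs: "xs < m"
  shows "chan_maj (m,n,W) (vec_chan n (\<lambda>y. W y xs))"
proof -
  define S :: "nat \<Rightarrow> nat \<Rightarrow> real" where "S = (\<lambda>i x. if x = 0 \<and> i = xs then 1 else 0)"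
  define D :: "nat \<Rightarrow> nat \<Rightarrow> real" where "D = (\<lambda>y i. if y = i then 1 else 0)"
  have S: "is_channel (1, m * 1, S)"
    unfolding is_channel_def S_def using xs by auto
  have Dc: "\<forall>z<1. (\<forall>y<n. \<forall>y0<n. D y (y0 * 1 + z) \<ge> 0)
              \<and> (\<forall>y0<n. (\<Sum>y<n. D y (y0 * 1 + z)) = 1)
              \<and> (\<forall>y<n. (\<Sum>y0<n. D y (y0 * 1 + z)) = 1)"
    unfolding D_def by auto
  have eq: "\<forall>y<n. \<forall>x'<1. (if x' = 0 then W y xs else 0) =
            (\<Sum>x<m. \<Sum>z<1. \<Sum>y0<n. D y (y0 * 1 + z) * W y0 x * S (x * 1 + z) x')"
  proof (intro allI impI)
    fix y x' :: nat assume y: "y < n" and x': "x' < 1"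
    have "(\<Sum>x<m. \<Sum>z<1. \<Sum>y0<n. D y (y0 * 1 + z) * W y0 x * S (x * 1 + z) x')
        = (\<Sum>x<m. (if x = xs then W y x else 0))"
      using y x' unfolding D_def S_def by (intro sum.cong refl) (auto simp: if_distrib[where f="\<lambda>u. u * _"] cong: if_cong)
    also have "\<dots> = W y xs" using xs by simp
    finally show "(if x' = 0 then W y xs else 0) =
            (\<Sum>x<m. \<Sum>z<1. \<Sum>y0<n. D y (y0 * 1 + z) * W y0 x * S (x * 1 + z) x')" using x' by simp
  qed
  show ?thesis unfolding chan_maj_def vec_chan_def Let_def
    using S Dc eq by (simp only: prod.case max.idem) blast
qed



definition dstoch :: "nat \<Rightarrow> (nat \<Rightarrow> nat \<Rightarrow> real) \<Rightarrow> bool" where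
  "dstoch K D = ((\<forall>y<K. \<forall>y0<K. D y y0 \<ge> 0) \<and> (\<forall>y0<K. (\<Sum>y<K. D y y0) = 1) \<and> (\<forall>y<K. (\<Sum>y0<K. D y y0) = 1))"

lemma chan_maj_from_DS:
  assumes pv: "prob_vec n' q"
    and DS: "\<And>z. z < M \<Longrightarrow> \<exists>D. dstoch (max n' K0) D \<and> (\<forall>y<max n' K0. Wc y z = (\<Sum>y0<max n' K0. D y y0 * q y0))"
    and M: "M \<ge> 1"
  shows "chan_maj (vec_chan n' q) (M, K0, Wc)"
proof -
  define k where "k = max n' K0"
  obtain Df where Df: "\<And>z. z < M \<Longrightarrow> dstoch k (Df z) \<and> (\<forall>y<k. Wc y z = (\<Sum>y0<k. Df z y y0 * q y0))"
    using DS unfolding k_def by metis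
  define S :: "nat \<Rightarrow> nat \<Rightarrow> real" where "S = (\<lambda>i x'. if i = x' \<and> x' < M then 1 else 0)"
  define D' where "D' = (\<lambda>y i. Df (i mod M) y (i div M))"
  have S: "is_channel (M, 1 * M, S)" unfolding is_channel_def S_def using M by auto
  have idx: "\<And>y0 z. z < M \<Longrightarrow> (y0 * M + z) mod M = z \<and> (y0 * M + z) div M = y0"
    by simp
  have Dc: "\<forall>z<M. (\<forall>y<k. \<forall>y0<k. D' y (y0 * M + z) \<ge> 0)
              \<and> (\<forall>y0<k. (\<Sum>y<k. D' y (y0 * M + z)) = 1)
              \<and> (\<forall>y<k. (\<Sum>y0<k. D' y (y0 * M + z)) = 1)"
    unfolding D'_def using Df idx unfolding dstoch_def by simp
  have eq: "\<forall>y<k. \<forall>x'<M. Wc y x' =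
            (\<Sum>x<1. \<Sum>z<M. \<Sum>y0<k. D' y (y0 * M + z) * (if x = 0 then q y0 else 0) * S (x * M + z) x')"
  proof (intro allI impI)
    fix y x' assume y: "y < k" and x': "x' < M"
    have "(\<Sum>x<1. \<Sum>z<M. \<Sum>y0<k. D' y (y0 * M + z) * (if x = 0 then q y0 else 0) * S (x * M + z) x')
       = (\<Sum>z<M. \<Sum>y0<k. D' y (y0 * M + z) * q y0 * S z x')" by simp
    also have "\<dots> = (\<Sum>z<M. if z = x' then (\<Sum>y0<k. Df z y y0 * q y0) else 0)"
      unfolding D'_def S_def using x' by (intro sum.cong refl) auto
    also have "\<dots> = Wc y x'" using x' Df y by simp
    finally show "Wc y x' = (\<Sum>x<1. \<Sum>z<M. \<Sum>y0<k. D' y (y0 * M + z) * (if x = 0 then q y0 else 0) * S (x * M + z) x')" ..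
  qed
  show ?thesis unfolding chan_maj_def vec_chan_def Let_def prod.case
    apply (rule exI[of _ M], rule exI[of _ S], rule exI[of _ D'])
    using S Dc eq M unfolding k_def by blast
qed

lemma DS_complete:
  fixes J :: "nat set" and col :: "nat \<Rightarrow> nat \<Rightarrow> real"
  assumes J: "J \<subseteq> {..<K}" "card J < K"
    and cnn: "\<And>j y. j \<in> J \<Longrightarrow> y < K \<Longrightarrow> col j y \<ge> 0"
    and csum: "\<And>j. j \<in> J \<Longrightarrow> (\<Sum>y<K. col j y) = 1"
    and rows: "\<And>y. y < K \<Longrightarrow> (\<Sum>j\<in>J. col j y) \<le> 1"
  defines "D \<equiv> (\<lambda>y y0. if y0 \<in> J then col y0 y else (1 - (\<Sum>j\<in>J. col j y)) / (K - card J))"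
  shows "dstoch K D"
proof -
  have finJ: "finite J" using J finite_subset by blast
  have Kc: "real K - real (card J) > 0" using J by simp
  have rowsum: "(\<Sum>y0<K. D y y0) = 1" if y: "y < K" for y
  proof -
    have "(\<Sum>y0<K. D y y0) = (\<Sum>y0\<in>J. D y y0) + (\<Sum>y0\<in>{..<K} - J. D y y0)"
      using J finJ by (metis finite_lessThan sum.subset_diff add.commute)
    also have "(\<Sum>y0\<in>J. D y y0) = (\<Sum>j\<in>J. col j y)" unfolding D_def by simp
    also have "(\<Sum>y0\<in>{..<K} - J. D y y0) = real (card ({..<K} - J)) * ((1 - (\<Sum>j\<in>J. col j y)) / (K - card J))"
      unfolding D_def by simp
    also have "card ({..<K} - J) = K - card J" using J finJ by (simp add: card_Diff_subset)
    finally show ?thesis using Kc J by (simp add: of_nat_diff)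
  qed
  have colsum: "(\<Sum>y<K. D y y0) = 1" if y0: "y0 < K" for y0
  proof (cases "y0 \<in> J")
    case True then show ?thesis unfolding D_def using csum by simp
  next
    case False
    have "(\<Sum>y<K. D y y0) = (\<Sum>y<K. (1 - (\<Sum>j\<in>J. col j y))) / (K - card J)"
      unfolding D_def using False by (simp add: sum_divide_distrib)
    also have "(\<Sum>y<K. (1 - (\<Sum>j\<in>J. col j y))) = K - (\<Sum>j\<in>J. \<Sum>y<K. col j y)"
      by (simp add: sum_subtractf sum.swap[of _ J])
    also have "(\<Sum>j\<in>J. \<Sum>y<K. col j y) = card J" using csum by simp
    finally show ?thesis using Kc J by (simp add: of_nat_diff)
  qed
  have nn: "D y y0 \<ge> 0" if "y < K" "y0 < K" for y y0
    unfolding D_def using cnn rows that Kc by (auto intro!: divide_nonneg_pos simp: of_nat_diff)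
  show ?thesis unfolding dstoch_def using rowsum colsum nn by auto
qed



lemma DS_complete_ex:
  fixes J :: "nat set" and col :: "nat \<Rightarrow> nat \<Rightarrow> real"
  assumes J: "J \<subseteq> {..<K}" "card J < K"
    and cnn: "\<And>j y. j \<in> J \<Longrightarrow> y < K \<Longrightarrow> col j y \<ge> 0"
    and csum: "\<And>j. j \<in> J \<Longrightarrow> (\<Sum>y<K. col j y) = 1"
    and rows: "\<And>y. y < K \<Longrightarrow> (\<Sum>j\<in>J. col j y) \<le> 1"
    and qz: "\<And>i. i < K \<Longrightarrow> i \<notin> J \<Longrightarrow> q i = 0"
  shows "\<exists>D. dstoch K D \<and> (\<forall>y<K. (\<Sum>y0<K. D y y0 * q y0) = (\<Sum>j\<in>J. col j y * q j))"
proof -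
  define D where "D \<equiv> (\<lambda>y y0. if y0 \<in> J then col y0 y else (1 - (\<Sum>j\<in>J. col j y)) / (K - card J))"
  have "dstoch K D" unfolding D_def by (rule DS_complete[OF J cnn csum rows])
  moreover have "(\<Sum>y0<K. D y y0 * q y0) = (\<Sum>j\<in>J. col j y * q j)" for y
  proof -
    have "(\<Sum>y0<K. D y y0 * q y0) = (\<Sum>y0\<in>J. D y y0 * q y0)"
      using J qz by (intro sum.mono_neutral_right) auto
    then show ?thesis unfolding D_def by simp
  qed
  ultimately show ?thesis by blast
qed

definition tlq :: "real \<Rightarrow> nat \<Rightarrow> nat \<Rightarrow> real" where
  "tlq e L = (\<lambda>i. if i = 0 then e else if i \<le> L then (1 - e) / L else 0)"

lemma sum_if_split: "(\<Sum>y\<in>A. if P y then f y else g y) = (\<Sum>y\<in>A. if P y then f y else 0) + (\<Sum>y\<in>A. if P y then 0 else (g y::real))"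
  by (subst sum.distrib[symmetric]) (rule sum.cong, auto)

lemma two_level_DS:
  fixes e :: real and L K0 :: nat and c :: "nat \<Rightarrow> real"
  assumes e: "0 < e" "e < 1" and L: "L \<ge> 1" and c: "prob_vec K0 c"
    and tail: "(\<Sum>y<K0. if c y > (1 - e) / (L + 1) then c y else 0) \<le> e"
  shows "\<exists>D. dstoch (max (L + 2 + K0) K0) D \<and>
     (\<forall>y<max (L + 2 + K0) K0. c y = (\<Sum>y0<max (L + 2 + K0) K0. D y y0 * tlq e L y0))"
proof -
  define K where "K = L + 2 + K0"
  have K: "max (L + 2 + K0) K0 = K" unfolding K_def by simp
  define th where "th = (1 - e) / (L + 1)"
  have th: "th > 0" unfolding th_def using e by simp
  define b where "b = (\<Sum>y<K0. if c y > th then c y else 0)"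
  have cnn: "c y \<ge> 0" for y using c unfolding prob_vec_def by (cases "y < K0") auto
  have cz: "\<And>y. y \<ge> K0 \<Longrightarrow> c y = 0" using c unfolding prob_vec_def by auto
  have pad: "\<And>f. (\<And>y. c y = 0 \<Longrightarrow> f y = 0) \<Longrightarrow> (\<Sum>y<K. f y) = (\<Sum>y<K0. f y)"
    unfolding K_def by (intro sum.mono_neutral_right) (auto simp: cz not_less)
  have c1: "(\<Sum>y<K0. c y) = 1" using c unfolding prob_vec_def by simp
  have be: "b \<le> e" using tail unfolding b_def th_def by simp
  have b0: "b \<ge> 0" unfolding b_def using cnn by (intro sum_nonneg) auto
  have b1: "b < 1" using be e by simp
  have cb: "\<And>y. c y > th \<Longrightarrow> y < K0 \<Longrightarrow> c y \<le> b"
    unfolding b_def proof -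
    fix y assume "c y > th" "y < K0"
    then have "c y = (if c y > th then c y else 0)" by simp
    also have "\<dots> \<le> (\<Sum>y<K0. if c y > th then c y else 0)"
      using \<open>y < K0\<close> cnn by (intro member_le_sum) auto
    finally show "c y \<le> (\<Sum>y<K0. if c y > th then c y else 0)" .
  qed
  have rest: "(\<Sum>y<K0. if c y > th then 0 else c y) = 1 - b"
    using c1 sum_if_split[of "\<lambda>y. c y > th" c c "{..<K0}"] unfolding b_def by simp
  define r where "r = (e - b) / (e * (1 - b))"
  have r0: "r \<ge> 0" unfolding r_def using be e b1 by simp
  define v where "v = (\<lambda>y. if c y > th then c y / e else c y * r)"
  define w where "w = (\<lambda>y. if c y > th then 0 else c y / (1 - b))"
  define col :: "nat \<Rightarrow> nat \<Rightarrow> real" where "col = (\<lambda>j. if j = 0 then v else w)"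
  have vsum: "(\<Sum>y<K. v y) = 1"
  proof -
    have "(\<Sum>y<K. v y) = (\<Sum>y<K0. v y)" using th by (intro pad) (auto simp: v_def)
    also have "\<dots> = (\<Sum>y<K0. if c y > th then c y else 0) / e + (\<Sum>y<K0. if c y > th then 0 else c y) * r"
    proof -
      have "(\<Sum>y<K0. v y) = (\<Sum>y<K0. if c y > th then c y / e else 0) + (\<Sum>y<K0. if c y > th then 0 else c y * r)"
        unfolding v_def by (rule sum_if_split)
      moreover have "(\<Sum>y<K0. if c y > th then c y / e else 0) = (\<Sum>y<K0. if c y > th then c y else 0) / e"
        by (simp add: sum_divide_distrib, intro sum.cong) auto
      moreover have "(\<Sum>y<K0. if c y > th then 0 else c y * r) = (\<Sum>y<K0. if c y > th then 0 else c y) * r"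
        by (simp add: sum_distrib_right, intro sum.cong) auto
      ultimately show ?thesis by simp
    qed
    also have "\<dots> = b / e + (1 - b) * r" using rest unfolding b_def by simp
    also have "\<dots> = 1" unfolding r_def using e b1 by (simp add: field_simps)
    finally show ?thesis .
  qed
  have wsum: "(\<Sum>y<K. w y) = 1"
  proof -
    have "(\<Sum>y<K. w y) = (\<Sum>y<K0. w y)" using th by (intro pad) (auto simp: w_def)
    also have "\<dots> = (\<Sum>y<K0. if c y > th then 0 else c y) / (1 - b)"
      unfolding w_def by (simp add: sum_divide_distrib, intro sum.cong) auto
    also have "\<dots> = 1" using rest b1 by simp
    finally show ?thesis .
  qed
  have rowJ: "(\<Sum>j\<in>{..<L+1}. col j y) = v y + L * w y" for y
    unfolding col_def by (subst Suc_eq_plus1[symmetric], subst sum.lessThan_Suc_shift) simp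
  have Dq: "(\<Sum>j\<in>{..<L+1}. col j y * tlq e L j) = c y" for y
  proof -
    have e1: "(\<Sum>j\<in>{..<L+1}. col j y * tlq e L j) = col 0 y * tlq e L 0 + (\<Sum>i<L. col (Suc i) y * tlq e L (Suc i))"
      by (subst Suc_eq_plus1[symmetric], rule sum.lessThan_Suc_shift)
    have e2: "(\<Sum>i<L. col (Suc i) y * tlq e L (Suc i)) = (\<Sum>i<L. w y * ((1 - e) / L))"
      by (intro sum.cong) (auto simp: col_def tlq_def)
    have e3: "col 0 y * tlq e L 0 = v y * e" by (simp add: col_def tlq_def)
    have "(\<Sum>j\<in>{..<L+1}. col j y * tlq e L j) = e * v y + (1 - e) * w y"
      unfolding e1 e2 e3 using L by simp
    also have "\<dots> = c y"
    proof (cases "c y > th")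
      case True then show ?thesis unfolding v_def w_def using e by simp
    next
      case False
      have "e * (c y * ((e - b) / (e * (1 - b)))) = c y * (e - b) / (1 - b)" using e b1 by (simp add: field_simps)
      moreover have "(1 - e) * (c y / (1 - b)) = c y * (1 - e) / (1 - b)" by simp
      moreover have "c y * (e - b) / (1 - b) + c y * (1 - e) / (1 - b) = c y"
        using b1 by (simp add: add_divide_distrib[symmetric] field_simps)
      ultimately show ?thesis unfolding v_def w_def r_def using False by (simp add: mult.commute)
    qed
    finally show ?thesis .
  qed
  have vnn: "v y \<ge> 0" for y unfolding v_def using cnn r0 e by auto
  have wnn: "w y \<ge> 0" for y unfolding w_def using cnn b1 by auto
  have rows: "v y + L * w y \<le> 1" if y: "y < K" for y
  proof (cases "c y > th")
    case True
    have "y < K0"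
    proof (rule ccontr)
      assume "\<not> y < K0" then have "c y = 0" using cz by simp
      then show False using True th by simp
    qed
    then show ?thesis using True cb[OF True] be e unfolding v_def w_def by simp
  next
    case False
    have "r \<le> 1 / (1 - b)" unfolding r_def using e b1 b0 mult_left_le_one_le[of b b] by (simp add: field_simps)
    then have "c y * r \<le> c y / (1 - b)" using cnn by (metis mult_left_mono times_divide_eq_right mult_1_right)
    then have "v y + L * w y \<le> c y / (1 - b) + L * (c y / (1 - b))" unfolding v_def w_def using False
      by simp
    also have "\<dots> = (L + 1) * c y / (1 - b)" by (simp add: add_divide_distrib algebra_simps)
    also have "\<dots> \<le> (L + 1) * th / (1 - b)" using False b1
      by (intro divide_right_mono mult_left_mono) auto
    also have "\<dots> = (1 - e) / (1 - b)" unfolding th_def by simp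
    also have "\<dots> \<le> 1" using be b1 by simp
    finally show ?thesis .
  qed
  have "\<exists>D. dstoch K D \<and> (\<forall>y<K. (\<Sum>y0<K. D y y0 * tlq e L y0) = (\<Sum>j\<in>{..<L+1}. col j y * tlq e L j))"
  proof (rule DS_complete_ex)
    show "{..<L+1} \<subseteq> {..<K}" "card {..<L+1} < K" unfolding K_def by auto
    show "\<And>j y. j \<in> {..<L+1} \<Longrightarrow> y < K \<Longrightarrow> 0 \<le> col j y" unfolding col_def using vnn wnn by auto
    show "\<And>j. j \<in> {..<L+1} \<Longrightarrow> (\<Sum>y<K. col j y) = 1" unfolding col_def using vsum wsum by auto
    show "\<And>y. y < K \<Longrightarrow> (\<Sum>j\<in>{..<L+1}. col j y) \<le> 1" using rowJ rows by simp
    show "\<And>i. i < K \<Longrightarrow> i \<notin> {..<L+1} \<Longrightarrow> tlq e L i = 0" unfolding tlq_def by auto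
  qed
  then show ?thesis using Dq unfolding K by auto
qed

lemma delta_DS:
  fixes K0 :: nat and c :: "nat \<Rightarrow> real"
  assumes c: "prob_vec K0 c"
  shows "\<exists>D. dstoch (max (K0 + 2) K0) D \<and>
     (\<forall>y<max (K0 + 2) K0. c y = (\<Sum>y0<max (K0 + 2) K0. D y y0 * (if y0 = 0 then 1 else 0)))"
proof -
  define K where "K = K0 + 2"
  have K: "max (K0 + 2) K0 = K" unfolding K_def by simp
  have cnn: "c y \<ge> 0" for y using c unfolding prob_vec_def by (cases "y < K0") auto
  have cz: "\<And>y. y \<ge> K0 \<Longrightarrow> c y = 0" using c unfolding prob_vec_def by auto
  have c1: "(\<Sum>y<K. c y) = 1" using c unfolding prob_vec_def K_def
  proof -
    have "(\<Sum>y<K0 + 2. c y) = (\<Sum>y<K0. c y)" using cz by (intro sum.mono_neutral_right) auto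
    then show "(\<Sum>y<K0 + 2. c y) = 1" using c unfolding prob_vec_def by simp
  qed
  have cle: "c y \<le> 1" for y
  proof (cases "y < K")
    case True then show ?thesis using c1 cnn by (metis finite_lessThan lessThan_iff member_le_sum)
  next
    case False then show ?thesis using cz K_def by simp
  qed
  have "\<exists>D. dstoch K D \<and> (\<forall>y<K. (\<Sum>y0<K. D y y0 * (if y0 = 0 then 1 else 0)) = (\<Sum>j\<in>{0::nat}. (\<lambda>j. c) j y * (if j = 0 then 1 else 0)))"
    apply (rule DS_complete_ex[where col="\<lambda>j. c" and J="{0}" and q="\<lambda>y0. if y0 = 0 then 1 else 0"])
    using cnn c1 cle by (auto simp: K_def)
  then show ?thesis unfolding K by auto
qed



lemma topsum_fin: "finite {S. S \<subseteq> {..<K::nat} \<and> card S = j}"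
  by (rule finite_subset[of _ "Pow {..<K}"]) auto

lemma topsum_ge:
  assumes "S \<subseteq> {..<K}" "card S = j"
  shows "(\<Sum>i\<in>S. f i) \<le> topsum K f j"
  unfolding topsum_def using assms topsum_fin by (intro Max_ge) auto

lemma topsum_obtain:
  assumes "j \<le> K"
  shows "\<exists>S. S \<subseteq> {..<K} \<and> card S = j \<and> topsum K f j = (\<Sum>i\<in>S. f i)"
proof -
  have ne: "{S. S \<subseteq> {..<K} \<and> card S = j} \<noteq> {}"
  proof -
    have "{..<j} \<in> {S. S \<subseteq> {..<K} \<and> card S = j}" using assms by auto
    then show ?thesis by blast
  qed
  have "topsum K f j \<in> (\<lambda>S. \<Sum>i\<in>S. f i) ` {S. S \<subseteq> {..<K} \<and> card S = j}"
    unfolding topsum_def using ne topsum_fin by (intro Max_in) auto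
  then show ?thesis by auto
qed

lemma sum_if_less: "(\<Sum>i<j. if i < L then a else 0) = real (min j L) * (a::real)"
  by (induction j) (auto simp: min_def algebra_simps)

lemma tlq_prefix:
  assumes L: "L \<ge> 1" and j: "1 \<le> j"
  shows "(\<Sum>i<j. tlq e L i) = e + real (min (j - 1) L) * ((1 - e) / L)"
proof -
  obtain j' where jj: "j = Suc j'" using j by (cases j) auto
  have "(\<Sum>i<j. tlq e L i) = tlq e L 0 + (\<Sum>i<j'. tlq e L (Suc i))"
    unfolding jj by (rule sum.lessThan_Suc_shift)
  also have "(\<Sum>i<j'. tlq e L (Suc i)) = (\<Sum>i<j'. if i < L then (1 - e) / L else 0)"
    by (intro sum.cong) (auto simp: tlq_def)
  finally show ?thesis unfolding sum_if_less jj by (simp add: tlq_def)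
qed

lemma tlq_shift:
  assumes L: "j \<le> L"
  shows "(\<Sum>i\<in>{Suc 0..<Suc j}. tlq e L i) = real j * ((1 - e) / L)"
proof -
  have "(\<Sum>i\<in>{0+1..<j+1}. tlq e L i) = (\<Sum>i\<in>{0..<j}. tlq e L (i + 1))"
    by (rule sum.shift_bounds_nat_ivl)
  also have "\<dots> = (\<Sum>i\<in>{0..<j}. (1 - e) / L)" using L by (intro sum.cong) (auto simp: tlq_def)
  finally show ?thesis by simp
qed

lemma two_level_maj:
  fixes e :: real and L K0 :: nat and c :: "nat \<Rightarrow> real"
  assumes e: "0 < e" "e < 1" and L: "L \<ge> 1" and c: "prob_vec K0 c"
    and tail: "(\<Sum>y<K0. if c y > (1 - e) / (L + 1) then c y else 0) \<le> e"
  shows "vec_maj (L + 2 + K0) (tlq e L) K0 c"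
proof -
  define K where "K = L + 2 + K0"
  have K: "max (L + 2 + K0) K0 = K" unfolding K_def by simp
  define th where "th = (1 - e) / (L + 1)"
  have th: "th > 0" unfolding th_def using e by simp
  have thL: "th \<le> (1 - e) / L" unfolding th_def using e L by (intro divide_left_mono) auto
  have cnn: "c y \<ge> 0" for y using c unfolding prob_vec_def by (cases "y < K0") auto
  have cz: "\<And>y. y \<ge> K0 \<Longrightarrow> c y = 0" using c unfolding prob_vec_def by auto
  have cK: "(\<Sum>y<K. c y) = 1"
  proof -
    have "(\<Sum>y<K. c y) = (\<Sum>y<K0. c y)" unfolding K_def using cz by (intro sum.mono_neutral_right) auto
    then show ?thesis using c unfolding prob_vec_def by simp
  qed
  have tailK: "(\<Sum>y<K. if c y > th then c y else 0) \<le> e"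
  proof -
    have "(\<Sum>y<K. if c y > th then c y else 0) = (\<Sum>y<K0. if c y > th then c y else 0)"
      unfolding K_def using cz by (intro sum.mono_neutral_right) auto
    then show ?thesis using tail unfolding th_def by simp
  qed
  have Sle1: "(\<Sum>y\<in>S. c y) \<le> 1" if "S \<subseteq> {..<K}" for S
  proof -
    have "(\<Sum>y\<in>S. c y) \<le> (\<Sum>y<K. c y)" using that cnn by (intro sum_mono2) auto
    then show ?thesis using cK by simp
  qed
  have main: "(\<Sum>y\<in>S. c y) \<le> topsum K (tlq e L) j" if S: "S \<subseteq> {..<K}" "card S = j" and jK: "j \<le> K" for S j
  proof -
    have finS: "finite S" using S finite_subset by blast
    define A where "A = {y\<in>S. c y > th}"
    have finA: "finite A" using finS A_def by simp
    have split: "(\<Sum>y\<in>S. c y) = (\<Sum>y\<in>A. c y) + (\<Sum>y\<in>S - A. c y)"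
    proof -
      have "A \<subseteq> S" unfolding A_def by auto
      then show ?thesis using finS by (simp add: sum.subset_diff add.commute)
    qed
    have sA: "(\<Sum>y\<in>A. c y) \<le> e"
    proof -
      have "(\<Sum>y\<in>A. c y) = (\<Sum>y\<in>A. if c y > th then c y else 0)" unfolding A_def by (intro sum.cong) auto
      also have "\<dots> \<le> (\<Sum>y<K. if c y > th then c y else 0)"
        using S cnn unfolding A_def by (intro sum_mono2) auto
      finally show ?thesis using tailK by simp
    qed
    have sB: "(\<Sum>y\<in>S - A. c y) \<le> real (card (S - A)) * th"
    proof -
      have "(\<Sum>y\<in>S - A. c y) \<le> (\<Sum>y\<in>S - A. th)" unfolding A_def by (intro sum_mono) auto
      then show ?thesis by simp
    qed
    show ?thesis
    proof (cases "j = 0")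
      case True
      then have "S = {}" using S finS by simp
      then show ?thesis using topsum_ge[of "{}" K 0 "tlq e L"] True by simp
    next
      case j0: False
      show ?thesis
      proof (cases "j \<ge> L + 1")
        case True
        have "min (j - 1) L = L" using True by simp
        then have "(\<Sum>i<j. tlq e L i) = 1" using tlq_prefix[OF L, of j e] j0 L by simp
        moreover have "(\<Sum>i<j. tlq e L i) \<le> topsum K (tlq e L) j" using jK by (intro topsum_ge) auto
        ultimately show ?thesis using Sle1[OF S(1)] by simp
      next
        case False
        then have jL: "j \<le> L" by simp
        show ?thesis
        proof (cases "A = {}")
          case True
          have "(\<Sum>y\<in>S. c y) \<le> real j * th" using split sB True S by simp
          also have "\<dots> \<le> real j * ((1 - e) / L)" using thL by (intro mult_left_mono) auto
          also have "\<dots> = (\<Sum>i\<in>{Suc 0..<Suc j}. tlq e L i)" using tlq_shift[OF jL] by simp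
          also have "\<dots> \<le> topsum K (tlq e L) j" using jL unfolding K_def by (intro topsum_ge) auto
          finally show ?thesis .
        next
          case False
          have "A \<subseteq> S" unfolding A_def by auto
          then have "card (S - A) = j - card A" using finA S by (simp add: card_Diff_subset)
          moreover have "card A \<ge> 1" using False finA by (simp add: Suc_le_eq card_gt_0_iff)
          ultimately have cSA: "card (S - A) \<le> j - 1" by simp
          have "(\<Sum>y\<in>S. c y) \<le> e + real (j - 1) * th"
          proof -
            have "real (card (S - A)) * th \<le> real (j - 1) * th"
              using cSA th by (intro mult_right_mono) auto
            then show ?thesis using split sA sB by linarith
          qed
          also have "\<dots> \<le> e + real (j - 1) * ((1 - e) / L)" using thL by (intro add_left_mono mult_left_mono) auto
          also have "\<dots> = (\<Sum>i<j. tlq e L i)"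
          proof -
            have "min (j - 1) L = j - 1" using jL by simp
            then show ?thesis using tlq_prefix[OF L, of j e] j0 by simp
          qed
          also have "\<dots> \<le> topsum K (tlq e L) j" using jK by (intro topsum_ge) auto
          finally show ?thesis .
        qed
      qed
    qed
  qed
  show ?thesis unfolding vec_maj_def K
  proof (intro allI impI)
    fix j assume jK: "j \<le> K"
    obtain S where S: "S \<subseteq> {..<K}" "card S = j" "topsum K c j = (\<Sum>i\<in>S. c i)"
      using topsum_obtain[OF jK] by blast
    show "topsum K c j \<le> topsum K (tlq e L) j" using main[OF S(1,2) jK] S(3) by simp
  qed
qed

lemma delta_maj:
  fixes K0 :: nat and c :: "nat \<Rightarrow> real"
  assumes c: "prob_vec K0 c"
  shows "vec_maj (K0 + 2) (\<lambda>i. if i = 0 then 1 else 0) K0 c"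
proof -
  define K where "K = K0 + 2"
  have K: "max (K0 + 2) K0 = K" unfolding K_def by simp
  have cnn: "c y \<ge> 0" for y using c unfolding prob_vec_def by (cases "y < K0") auto
  have cz: "\<And>y. y \<ge> K0 \<Longrightarrow> c y = 0" using c unfolding prob_vec_def by auto
  have cK: "(\<Sum>y<K. c y) = 1"
  proof -
    have "(\<Sum>y<K. c y) = (\<Sum>y<K0. c y)" unfolding K_def using cz by (intro sum.mono_neutral_right) auto
    then show ?thesis using c unfolding prob_vec_def by simp
  qed
  show ?thesis unfolding vec_maj_def K
  proof (intro allI impI)
    fix j assume jK: "j \<le> K"
    obtain S where S: "S \<subseteq> {..<K}" "card S = j" "topsum K c j = (\<Sum>i\<in>S. c i)"
      using topsum_obtain[OF jK] by blast
    show "topsum K c j \<le> topsum K (\<lambda>i. if i = 0 then 1 else 0) j"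
    proof (cases "j = 0")
      case True
      then have "S = {}" using S finite_subset by fastforce
      then show ?thesis using S topsum_ge[of "{}" K 0 "\<lambda>i. if i = 0 then 1 else (0::real)"] True by simp
    next
      case False
      have "(\<Sum>i\<in>S. c i) \<le> (\<Sum>y<K. c y)" using S cnn by (intro sum_mono2) auto
      then have "(\<Sum>i\<in>S. c i) \<le> 1" using cK by simp
      moreover have "(\<Sum>i<j. (if i = 0 then 1 else 0::real)) = 1" using False by (simp add: sum.delta)
      moreover have "(\<Sum>i<j. (if i = 0 then 1 else 0::real)) \<le> topsum K (\<lambda>i. if i = 0 then 1 else 0) j"
        using jK by (intro topsum_ge) auto
      ultimately show ?thesis using S by simp
    qed
  qed
qed



lemma tlq_prefix_f:
  assumes L: "L \<ge> 1" and j: "1 \<le> j" and f0: "f 0 = 0"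
  shows "(\<Sum>i<j. f (tlq e L i)) = f e + real (min (j - 1) L) * f ((1 - e) / L)"
proof -
  obtain j' where jj: "j = Suc j'" using j by (cases j) auto
  have "(\<Sum>i<j. f (tlq e L i)) = f (tlq e L 0) + (\<Sum>i<j'. f (tlq e L (Suc i)))"
    unfolding jj by (rule sum.lessThan_Suc_shift)
  also have "(\<Sum>i<j'. f (tlq e L (Suc i))) = (\<Sum>i<j'. if i < L then f ((1 - e) / L) else 0)"
    using f0 by (intro sum.cong) (auto simp: tlq_def)
  finally show ?thesis unfolding sum_if_less jj by (simp add: tlq_def)
qed

lemma tlq_prob:
  assumes e: "0 < e" "e < 1" and L: "L \<ge> 1"
  shows "prob_vec (L + 2 + K0) (tlq e L)"
proof -
  have "(\<Sum>i<L + 2 + K0. tlq e L i) = e + real (min (L + 2 + K0 - 1) L) * ((1 - e) / L)"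
    using tlq_prefix_f[OF L, of "L+2+K0" "\<lambda>x. x" e] by simp
  also have "\<dots> = 1" using L by (simp add: min_def)
  finally show ?thesis unfolding prob_vec_def tlq_def using e by auto
qed

lemma tlq_entropy:
  assumes e: "0 < e" "e < 1" and L: "L \<ge> 1"
  shows "entropy (L + 2 + K0) (tlq e L) \<ge> (1 - e) * log 2 L"
proof -
  have "(\<Sum>i<L + 2 + K0. tlq e L i * ln (tlq e L i)) = e * ln e + real (min (L + 2 + K0 - 1) L) * ((1 - e) / L * ln ((1 - e) / L))"
    using tlq_prefix_f[OF L, of "L+2+K0" "\<lambda>x. x * ln x" e] by simp
  also have "\<dots> = e * ln e + (1 - e) * ln (1 - e) - (1 - e) * ln L" using L e by (simp add: min_def ln_div right_diff_distrib)
  also have "\<dots> \<le> - (1 - e) * ln L"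
  proof -
    have "e * ln e \<le> 0" "(1 - e) * ln (1 - e) \<le> 0" using xlnx_nonpos[of e] xlnx_nonpos[of "1 - e"] e by auto
    then show ?thesis by linarith
  qed
  finally have "(1 - e) * ln L \<le> - (\<Sum>i<L + 2 + K0. tlq e L i * ln (tlq e L i))" by linarith
  then have "(1 - e) * ln L / ln 2 \<le> - (\<Sum>i<L + 2 + K0. tlq e L i * ln (tlq e L i)) / ln 2"
    by (intro divide_right_mono) auto
  then show ?thesis unfolding entropy_ln log_def by simp
qed

lemma delta_prob: "prob_vec (K0 + 2) (\<lambda>i. if i = 0 then 1 else 0)"
  unfolding prob_vec_def by (auto simp: sum.delta)

lemma delta_entropy: "entropy (K0 + 2) (\<lambda>i. if i = 0 then 1 else 0) = 0"
  unfolding entropy_def by (auto intro!: sum.neutral)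

lemma neg_xlnx_le1: "0 \<le> x \<Longrightarrow> - (x * ln x) \<le> (1::real)"
proof (cases "x = 0")
  case False
  assume x: "0 \<le> x"
  then have xp: "x > 0" using False by simp
  have "ln (1 / x) \<le> 1 / x - 1" using xp by (intro ln_le_minus_one) simp
  then have "x * ln (1 / x) \<le> x * (1 / x - 1)" using xp by (intro mult_left_mono) auto
  moreover have "- (x * ln x) = x * ln (1/x)" using xp by (simp add: ln_div)
  moreover have "x * (1 / x - 1) = 1 - x" using xp by (simp add: field_simps)
  ultimately show ?thesis using xp by linarith
qed simp

lemma sum_xlnx_bound:
  fixes q :: "nat \<Rightarrow> real"
  assumes fin: "finite S" and qnn: "\<And>i. q i \<ge> 0" and a: "(\<Sum>i\<in>S. q i) = a"
  shows "- (\<Sum>i\<in>S. q i * ln (q i)) \<le> 1 + a * ln (card S)"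
proof (cases "S = {}")
  case True then show ?thesis using a by simp
next
  case False
  then have cS: "card S > 0" using fin card_gt_0_iff by blast
  have "a * ln (a / card S) \<le> (\<Sum>i\<in>S. q i * ln (q i / 1))"
    using log_sum[OF fin, of q "\<lambda>_. 1"] cS qnn a by simp
  moreover have "a * ln (a / card S) = a * ln a - a * ln (card S)" if "a > 0"
    using that cS by (simp add: ln_div algebra_simps)
  moreover have "a \<ge> 0" using a qnn sum_nonneg[of S q] by simp
  ultimately have "- (\<Sum>i\<in>S. q i * ln (q i)) \<le> - (a * ln a) + a * ln (card S)"
    by (cases "a = 0") auto
  then show ?thesis using neg_xlnx_le1[OF \<open>a \<ge> 0\<close>] by simp
qed

lemma entropy_upper:
  fixes c q :: "nat \<Rightarrow> real" and th e :: real
  assumes c: "prob_vec K0 c" and q: "prob_vec n' q" and maj: "vec_maj n' q K0 c"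
    and th: "0 < th" and e: "0 \<le> e" "e < 1"
    and tail: "(\<Sum>y<K0. if c y < th then c y else 0) \<le> e"
  shows "entropy n' q \<le> log 2 (1 / th) + e * log 2 K0 + 4"
proof -
  define K where "K = max n' K0"
  have cnn: "c y \<ge> 0" for y using c unfolding prob_vec_def by (cases "y < K0") auto
  have qnn: "q y \<ge> 0" for y using q unfolding prob_vec_def by (cases "y < n'") auto
  have cz: "\<And>y. y \<ge> K0 \<Longrightarrow> c y = 0" using c unfolding prob_vec_def by auto
  have qz: "\<And>y. y \<ge> n' \<Longrightarrow> q y = 0" using q unfolding prob_vec_def by auto
  have c1: "(\<Sum>y<K0. c y) = 1" using c unfolding prob_vec_def by simp
  have qK: "(\<Sum>y<K. q y) = 1"
  proof -
    have "(\<Sum>y<K. q y) = (\<Sum>y<n'. q y)" unfolding K_def using qz by (intro sum.mono_neutral_right) auto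
    then show ?thesis using q unfolding prob_vec_def by simp
  qed
  have majK: "\<And>j. j \<le> K \<Longrightarrow> topsum K c j \<le> topsum K q j" using maj unfolding vec_maj_def K_def by simp
  define T where "T = {y. y < K0 \<and> c y \<ge> th}"
  have finT: "finite T" unfolding T_def by simp
  have TK: "T \<subseteq> {..<K}" unfolding T_def K_def by auto
  have cT: "(\<Sum>y\<in>T. c y) \<ge> 1 - e"
  proof -
    have "(\<Sum>y<K0. c y) = (\<Sum>y<K0. if c y < th then c y else 0) + (\<Sum>y<K0. if c y < th then 0 else c y)"
      by (subst sum.distrib[symmetric]) (rule sum.cong, auto)
    moreover have "(\<Sum>y<K0. if c y < th then 0 else c y) = (\<Sum>y\<in>T. c y)"
      unfolding T_def by (rule sum.mono_neutral_cong_right) auto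
    ultimately show ?thesis using tail c1 by simp
  qed
  have cardT: "real (card T) \<le> 1 / th"
  proof -
    have "real (card T) * th = (\<Sum>y\<in>T. th)" by simp
    also have "\<dots> \<le> (\<Sum>y\<in>T. c y)" unfolding T_def by (intro sum_mono) auto
    also have "\<dots> \<le> (\<Sum>y<K0. c y)" unfolding T_def using cnn by (intro sum_mono2) auto
    finally show ?thesis using c1 th by (simp add: field_simps)
  qed
  have cardTK: "card T \<le> K" using TK card_mono[of "{..<K}" T] by simp
  obtain S1 where S1: "S1 \<subseteq> {..<K}" "card S1 = card T" "topsum K q (card T) = (\<Sum>i\<in>S1. q i)"
    using topsum_obtain[OF cardTK] by blast
  have a1: "(\<Sum>i\<in>S1. q i) \<ge> 1 - e"
    using topsum_ge[OF TK refl, of c] majK[OF cardTK] S1(3) cT by simp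
  have K0K: "K0 \<le> K" unfolding K_def by simp
  obtain S2 where S2: "S2 \<subseteq> {..<K}" "card S2 = K0" "topsum K q K0 = (\<Sum>i\<in>S2. q i)"
    using topsum_obtain[OF K0K] by blast
  have a2: "(\<Sum>i\<in>S2. q i) \<ge> 1"
    using topsum_ge[of "{..<K0}" K K0 c] K0K majK[OF K0K] S2(3) c1 by simp
  have finS1: "finite S1" and finS2: "finite S2" using S1 S2 finite_subset by auto
  have out: "q y = 0" if "y < K" "y \<notin> S2" for y
  proof (rule ccontr)
    assume "q y \<noteq> 0" then have "q y > 0" using qnn[of y] by simp
    have "(\<Sum>i\<in>S2. q i) + q y = (\<Sum>i\<in>insert y S2. q i)" using that finS2 by simp
    also have "\<dots> \<le> (\<Sum>i<K. q i)" using that S2 qnn by (intro sum_mono2) auto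
    finally show False using a2 qK \<open>q y > 0\<close> by simp
  qed
  define B where "B = S2 - S1"
  have finB: "finite B" using finS2 B_def by simp
  have disj: "S1 \<inter> B = {}" unfolding B_def by auto
  have UK: "S1 \<union> B \<subseteq> {..<K}" using S1 S2 unfolding B_def by auto
  have "(\<Sum>y<K. q y * ln (q y)) = (\<Sum>y\<in>S1 \<union> B. q y * ln (q y))"
    using out UK unfolding B_def by (intro sum.mono_neutral_right) auto
  also have "\<dots> = (\<Sum>y\<in>S1. q y * ln (q y)) + (\<Sum>y\<in>B. q y * ln (q y))"
    using finS1 finB disj by (rule sum.union_disjoint)
  finally have split: "(\<Sum>y<K. q y * ln (q y)) = (\<Sum>y\<in>S1. q y * ln (q y)) + (\<Sum>y\<in>B. q y * ln (q y))" .
  define a where "a = (\<Sum>i\<in>S1. q i)"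
  define b where "b = (\<Sum>i\<in>B. q i)"
  have "a + b = (\<Sum>i\<in>S1 \<union> B. q i)" unfolding a_def b_def using finS1 finB disj by (simp add: sum.union_disjoint)
  also have "\<dots> \<le> (\<Sum>i<K. q i)" using UK qnn by (intro sum_mono2) auto
  also have "\<dots> \<le> 1" using qK by simp
  finally have ab: "a + b \<le> 1" .
  have b0: "b \<ge> 0" unfolding b_def using qnn by (intro sum_nonneg) auto
  have a0: "a \<le> 1" "a \<ge> 0" using ab b0 a1 e unfolding a_def by auto
  have be: "b \<le> e" using ab a1 unfolding a_def by simp
  have h1: "- (\<Sum>y\<in>S1. q y * ln (q y)) \<le> 1 + a * ln (card S1)"
    using sum_xlnx_bound[OF finS1 qnn] unfolding a_def by simp
  have h2: "- (\<Sum>y\<in>B. q y * ln (q y)) \<le> 1 + b * ln (card B)"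
    using sum_xlnx_bound[OF finB qnn] unfolding b_def by simp
  have lnS1: "a * ln (card S1) \<le> ln (1 / th)"
  proof (cases "card S1 = 0")
    case True
    then have "S1 = {}" using finS1 by simp
    then show ?thesis using a1 e by simp
  next
    case False
    have "ln (card S1) \<ge> 0" using False by simp
    then have "a * ln (card S1) \<le> ln (card S1)" using a0 by (simp add: mult_left_le_one_le)
    also have "\<dots> \<le> ln (1 / th)" using cardT S1 False th by (subst ln_le_cancel_iff) auto
    finally show ?thesis .
  qed
  have lnB: "b * ln (card B) \<le> e * ln K0"
  proof (cases "card B = 0")
    case True
    then show ?thesis using e by (cases "K0 = 0") auto
  next
    case False
    have "card B \<le> card S2" using finS2 unfolding B_def by (intro card_mono) auto
    then have cB: "card B \<le> K0" using S2 by simp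
    have "ln (card B) \<ge> 0" using False by simp
    then have "b * ln (card B) \<le> e * ln (card B)" using be by (intro mult_right_mono) auto
    also have "\<dots> \<le> e * ln K0" using e cB False by (intro mult_left_mono) auto
    finally show ?thesis .
  qed
  have "- (\<Sum>y<K. q y * ln (q y)) \<le> 2 + ln (1 / th) + e * ln K0"
    using split h1 h2 lnS1 lnB by linarith
  moreover have "(\<Sum>y<K. q y * ln (q y)) = (\<Sum>y<n'. q y * ln (q y))"
    unfolding K_def using qz by (intro entropy_pad) auto
  ultimately have "- (\<Sum>y<n'. q y * ln (q y)) / ln 2 \<le> (2 + ln (1 / th) + e * ln K0) / ln 2"
    by (intro divide_right_mono) auto
  then have E: "entropy n' q \<le> (2 + ln (1 / th) + e * ln K0) / ln 2"
    unfolding entropy_ln by simp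
  have "ln (1/2) \<le> (1/2 - 1::real)" by (rule ln_le_minus_one) simp
  then have "ln 2 \<ge> (1/2::real)" by (simp add: ln_div)
  then have "2 / ln 2 \<le> (4::real)" by (simp add: field_simps)
  then show ?thesis using E unfolding log_def by (simp add: add_divide_distrib)
qed



lemma markov_upper:
  fixes c :: "nat \<Rightarrow> real"
  assumes cnn: "\<And>y. c y \<ge> 0" and th: "th > 0" and t: "t > 0"
  shows "(\<Sum>y<K. if c y > th then c y else 0) \<le> th powr (- t) * (\<Sum>y<K. c y powr (1 + t))"
  unfolding sum_distrib_left
proof (intro sum_mono)
  fix y
  show "(if c y > th then c y else 0) \<le> th powr (- t) * c y powr (1 + t)"
  proof (cases "c y > th")
    case True
    then have cp: "c y > 0" using th by simp
    have "1 \<le> (c y / th) powr t" using True th t by (intro ge_one_powr_ge_zero) auto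
    then have "c y * 1 \<le> c y * (c y / th) powr t" using cp by (intro mult_left_mono) auto
    also have "c y * (c y / th) powr t = th powr (- t) * c y powr (1 + t)"
    proof -
      have "c y * (c y / th) powr t = c y * c y powr t / th powr t" by (simp add: powr_divide)
      moreover have "c y powr (1 + t) = c y * c y powr t" using cp by (simp add: powr_add)
      moreover have "th powr (- t) = 1 / th powr t" by (simp add: powr_minus divide_inverse)
      ultimately show ?thesis by simp
    qed
    finally show ?thesis using True by simp
  qed simp
qed

lemma markov_lower:
  fixes c :: "nat \<Rightarrow> real"
  assumes cnn: "\<And>y. c y \<ge> 0" and th: "th > 0" and t: "t > 0"
  shows "(\<Sum>y<K. if c y < th then c y else 0) \<le> th powr t * (\<Sum>y<K. c y powr (1 - t))"
  unfolding sum_distrib_left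
proof (intro sum_mono)
  fix y
  show "(if c y < th then c y else 0) \<le> th powr t * c y powr (1 - t)"
  proof (cases "c y < th \<and> c y > 0")
    case True
    then have cp: "c y > 0" by simp
    have "c y powr t \<le> th powr t" using True t by (intro powr_mono2) auto
    then have "c y powr t * c y powr (1 - t) \<le> th powr t * c y powr (1 - t)"
      by (intro mult_right_mono) auto
    also have "c y powr t * c y powr (1 - t) = c y" using cp by (simp add: powr_add[symmetric])
    finally show ?thesis using True by simp
  next
    case False
    then show ?thesis using cnn[of y] by auto
  qed
qed

lemma tpow_powsum:
  assumes chan: "is_channel (m,n,W)" and s: "s > 0" and rho: "rho \<ge> 0"
    and base: "\<And>x. x < m \<Longrightarrow> (\<Sum>y<n. W y x powr s) \<le> rho"
  shows "\<And>x. x < m^k \<Longrightarrow> (\<Sum>y<n^k. mat (tpow (m,n,W) k) y x powr s) \<le> rho ^ k"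
proof (induction k)
  case 0
  then have "x = 0" by simp
  then show ?case using tpow_shape[of m n W 0] by (simp add: triv_chan_def mat_def)
next
  case (Suc k)
  fix x assume x: "x < m ^ Suc k"
  have n: "n^k > 0" using n_pos[OF chan] by simp
  have m: "m^k > 0" using is_channelD(1)[OF chan] by simp
  have a: "x div m^k < m" using x by (simp add: less_mult_imp_div_less mult.commute)
  have b: "x mod m^k < m^k" using m by simp
  have "(\<Sum>y<n^Suc k. mat (tpow (m,n,W) (Suc k)) y x powr s)
      = (\<Sum>y<n*n^k. (W (y div n^k) (x div m^k) * mat (tpow (m,n,W) k) (y mod n^k) (x mod m^k)) powr s)"
    unfolding tpow_Suc_mat using x by (intro sum.cong) auto
  also have "\<dots> = (\<Sum>i<n. \<Sum>j<n^k. (W i (x div m^k) * mat (tpow (m,n,W) k) j (x mod m^k)) powr s)"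
    by (rule tensor_colsum[OF n])
  also have "\<dots> = (\<Sum>i<n. W i (x div m^k) powr s) * (\<Sum>j<n^k. mat (tpow (m,n,W) k) j (x mod m^k) powr s)"
    by (simp add: powr_mult sum_product)
  also have "\<dots> \<le> rho * rho ^ k"
    using base[OF a] Suc.IH[OF b] rho by (intro mult_mono) (auto intro!: sum_nonneg)
  finally show "(\<Sum>y<n^Suc k. mat (tpow (m,n,W) (Suc k)) y x powr s) \<le> rho ^ Suc k" by simp
qed

fun idx :: "nat \<Rightarrow> nat \<Rightarrow> nat \<Rightarrow> nat" where
  "idx m xs 0 = 0"
| "idx m xs (Suc k) = xs * m^k + idx m xs k"

lemma idx_lt: "xs < m \<Longrightarrow> idx m xs k < m^k"
proof (induction k)
  case (Suc k)
  have "xs * m^k + idx m xs k < xs * m^k + m^k" using Suc by simp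
  also have "\<dots> = (xs + 1) * m^k" by simp
  also have "\<dots> \<le> m * m^k" using Suc.prems by (intro mult_right_mono) auto
  finally show ?case by simp
qed simp

lemma tpow_powsum_idx:
  assumes chan: "is_channel (m,n,W)" and xs: "xs < m"
  shows "(\<Sum>y<n^k. mat (tpow (m,n,W) k) y (idx m xs k) powr s) = (\<Sum>y<n. W y xs powr s) ^ k"
proof (induction k)
  case 0
  then show ?case using tpow_shape[of m n W 0] by (simp add: triv_chan_def mat_def)
next
  case (Suc k)
  have n: "n^k > 0" using n_pos[OF chan] by simp
  have m: "m^k > 0" using is_channelD(1)[OF chan] by simp
  define x where "x = idx m xs (Suc k)"
  have il: "idx m xs k < m^k" by (rule idx_lt[OF xs])
  have x: "x < m ^ Suc k" unfolding x_def by (rule idx_lt[OF xs])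
  have a: "x div m^k = xs" unfolding x_def using il m by (simp add: add.commute[of "xs * _"] div_mult_self1)
  have b: "x mod m^k = idx m xs k" unfolding x_def using il by simp
  have "(\<Sum>y<n^Suc k. mat (tpow (m,n,W) (Suc k)) y x powr s)
      = (\<Sum>y<n*n^k. (W (y div n^k) (x div m^k) * mat (tpow (m,n,W) k) (y mod n^k) (x mod m^k)) powr s)"
    unfolding tpow_Suc_mat using x by (intro sum.cong) auto
  also have "\<dots> = (\<Sum>i<n. \<Sum>j<n^k. (W i (x div m^k) * mat (tpow (m,n,W) k) j (x mod m^k)) powr s)"
    by (rule tensor_colsum[OF n])
  also have "\<dots> = (\<Sum>i<n. W i (x div m^k) powr s) * (\<Sum>j<n^k. mat (tpow (m,n,W) k) j (x mod m^k) powr s)"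
    by (simp add: powr_mult sum_product)
  also have "\<dots> = (\<Sum>y<n. W y xs powr s) ^ Suc k" unfolding a b Suc.IH by simp
  finally show ?case unfolding x_def .
qed



lemma deriv_term:
  fixes a :: real
  assumes "0 \<le> a"
  shows "((\<lambda>u. a powr (1 + u)) has_real_derivative a * ln a) (at 0)"
proof (cases "a = 0")
  case True then show ?thesis by simp
next
  case False
  then have a: "a > 0" using assms by simp
  have "((\<lambda>u. (\<lambda>_. a) u powr (\<lambda>u. 1 + u) u) has_real_derivative
     ((\<lambda>_. a) 0 powr (\<lambda>u. 1 + u) 0) * (1 * ln ((\<lambda>_. a) 0) + 0 * (\<lambda>u. 1 + u) 0 / (\<lambda>_. a) 0)) (at 0)"
    by (rule DERIV_powr) (use a in \<open>auto intro!: derivative_eq_intros\<close>)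
  then show ?thesis using a by simp
qed

lemma deriv_F:
  assumes pv: "prob_vec n p"
  shows "((\<lambda>u. \<Sum>y<n. p y powr (1 + u)) has_real_derivative (\<Sum>y<n. p y * ln (p y))) (at 0)"
proof (rule DERIV_sum)
  fix y assume "y \<in> {..<n}"
  have "p y \<ge> 0" using pv unfolding prob_vec_def by (cases "y < n") auto
  then show "((\<lambda>u. p y powr (1 + u)) has_real_derivative p y * ln (p y)) (at 0)" by (rule deriv_term)
qed

lemma F0:
  assumes pv: "prob_vec n p"
  shows "(\<Sum>y<n. p y powr (1 + 0)) = 1"
proof -
  have "(\<Sum>y<n. p y powr (1 + 0)) = (\<Sum>y<n. p y)"
    using pv unfolding prob_vec_def by (intro sum.cong) auto
  then show ?thesis using pv unfolding prob_vec_def by simp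
qed

lemma renyi_upper:
  assumes pv: "prob_vec n p" and g: "g > 0"
  shows "\<exists>d>0. \<forall>t. 0 < t \<and> t < d \<longrightarrow> (\<Sum>y<n. p y powr (1 + t)) \<le> 2 powr (- (t * (entropy n p - g)))"
proof -
  define k where "k = - ((entropy n p - g) * ln 2)"
  define G where "G = (\<lambda>u. (\<Sum>y<n. p y powr (1 + u)) - exp (u * k))"
  have D: "(G has_real_derivative (\<Sum>y<n. p y * ln (p y)) - exp (0 * k) * k) (at 0)"
    unfolding G_def by (rule DERIV_diff[OF deriv_F[OF pv]]) (auto intro!: derivative_eq_intros)
  have "(\<Sum>y<n. p y * ln (p y)) = - entropy n p * ln 2" unfolding entropy_ln by simp
  then have l: "(\<Sum>y<n. p y * ln (p y)) - exp (0 * k) * k = - g * ln 2" unfolding k_def by (simp add: algebra_simps)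
  have "- g * ln 2 < 0" using g by simp
  then obtain d where d: "d > 0" "\<And>h. h > 0 \<Longrightarrow> h < d \<Longrightarrow> G 0 > G (0 + h)"
    using DERIV_neg_dec_right[OF D[unfolded l]] by blast
  have G0: "G 0 = 0" unfolding G_def using F0[OF pv] by simp
  show ?thesis
  proof (intro exI[of _ d] conjI allI impI)
    fix t assume t: "0 < t \<and> t < d"
    then have "G t < 0" using d G0 by force
    moreover have "exp (t * k) = 2 powr (- (t * (entropy n p - g)))"
      unfolding k_def powr_def by (simp add: algebra_simps)
    ultimately show "(\<Sum>y<n. p y powr (1 + t)) \<le> 2 powr (- (t * (entropy n p - g)))"
      unfolding G_def by simp
  qed (use d in auto)
qed

lemma renyi_lower:
  assumes pv: "prob_vec n p" and g: "g > 0"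
  shows "\<exists>d>0. \<forall>t. 0 < t \<and> t < d \<longrightarrow> (\<Sum>y<n. p y powr (1 - t)) \<le> 2 powr (t * (entropy n p + g))"
proof -
  define k where "k = - ((entropy n p + g) * ln 2)"
  define G where "G = (\<lambda>u. (\<Sum>y<n. p y powr (1 + u)) - exp (u * k))"
  have D: "(G has_real_derivative (\<Sum>y<n. p y * ln (p y)) - exp (0 * k) * k) (at 0)"
    unfolding G_def by (rule DERIV_diff[OF deriv_F[OF pv]]) (auto intro!: derivative_eq_intros)
  have "(\<Sum>y<n. p y * ln (p y)) = - entropy n p * ln 2" unfolding entropy_ln by simp
  then have l: "(\<Sum>y<n. p y * ln (p y)) - exp (0 * k) * k = g * ln 2" unfolding k_def by (simp add: algebra_simps)
  have "g * ln 2 > 0" using g by simp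
  then obtain d where d: "d > 0" "\<And>h. h > 0 \<Longrightarrow> h < d \<Longrightarrow> G (0 - h) < G 0"
    using DERIV_pos_inc_left[OF D[unfolded l]] by blast
  have G0: "G 0 = 0" unfolding G_def using F0[OF pv] by simp
  show ?thesis
  proof (intro exI[of _ d] conjI allI impI)
    fix t assume t: "0 < t \<and> t < d"
    then have "G (- t) < 0" using d G0 by force
    moreover have "exp (- t * k) = 2 powr (t * (entropy n p + g))"
      unfolding k_def powr_def by (simp add: algebra_simps)
    ultimately show "(\<Sum>y<n. p y powr (1 - t)) \<le> 2 powr (t * (entropy n p + g))"
      unfolding G_def by simp
  qed (use d in auto)
qed



lemma geo_ev:
  fixes c e B :: real
  assumes c: "c > 0" and e: "e > 0" and B: "B \<ge> 0"
  shows "\<exists>K. \<forall>k\<ge>K. B * 2 powr (- (c * real k)) \<le> e"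
proof -
  define K where "K = nat \<lceil>log 2 (B / e + 1) / c\<rceil>"
  have "B * 2 powr (- (c * real k)) \<le> e" if k: "k \<ge> K" for k
  proof -
    have "log 2 (B / e + 1) / c \<le> real K" unfolding K_def by linarith
    also have "\<dots> \<le> real k" using k by simp
    finally have "log 2 (B / e + 1) \<le> c * real k" using c by (simp add: field_simps)
    then have le: "2 powr (log 2 (B / e + 1)) \<le> 2 powr (c * real k)" by simp
    have "B / e \<ge> 0" using B e by simp
    then have "B / e + 1 > 0" by simp
    then have "2 powr (log 2 (B / e + 1)) = B / e + 1" by simp
    then have P: "B / e + 1 \<le> 2 powr (c * real k)" using le by simp
    have pos: "2 powr (c * real k) > 0" by simp
    have "B * 2 powr (- (c * real k)) = B / 2 powr (c * real k)" by (simp add: powr_minus divide_inverse)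
    also have "\<dots> \<le> B / (B / e + 1)" using P B e \<open>B / e + 1 > 0\<close> by (intro divide_left_mono) auto
    also have "\<dots> \<le> e" using B e by (simp add: field_simps)
    finally show ?thesis .
  qed
  then show ?thesis by blast
qed

lemma uniform_t:
  assumes m: "m \<ge> (1::nat)" and H: "\<And>x. x < m \<Longrightarrow> \<exists>d>0. \<forall>t. 0 < t \<and> t < d \<longrightarrow> P x t"
  shows "\<exists>t>0. \<forall>x<m. P x (t::real)"
proof -
  obtain f where f: "\<And>x. x < m \<Longrightarrow> f x > 0 \<and> (\<forall>t. 0 < t \<and> t < f x \<longrightarrow> P x t)"
    using H by metis
  define t where "t = Min (f ` {..<m}) / 2"
  have "f 0 \<in> f ` {..<m}" using m by simp
  then have ne: "f ` {..<m} \<noteq> {}" by blast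
  have Mp: "Min (f ` {..<m}) > 0" using f ne by (subst Min_gr_iff) auto
  have "P x t" if x: "x < m" for x
  proof -
    have "Min (f ` {..<m}) \<le> f x" using x by (intro Min_le) auto
    then show ?thesis using f[OF x] Mp unfolding t_def by auto
  qed
  moreover have "t > 0" using Mp unfolding t_def by simp
  ultimately show ?thesis by blast
qed

lemma floor_half:
  fixes x :: real assumes "x \<ge> 1"
  shows "real (nat \<lfloor>x\<rfloor>) \<ge> x / 2" "real (nat \<lfloor>x\<rfloor>) \<le> x" "nat \<lfloor>x\<rfloor> \<ge> 1"
proof -
  have f1: "real_of_int \<lfloor>x\<rfloor> > x - 1" "real_of_int \<lfloor>x\<rfloor> \<le> x" by linarith+
  have f0: "\<lfloor>x\<rfloor> \<ge> 1" using assms by linarith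
  then have e: "real (nat \<lfloor>x\<rfloor>) = real_of_int \<lfloor>x\<rfloor>" by simp
  show "real (nat \<lfloor>x\<rfloor>) \<le> x" using e f1 by simp
  show "nat \<lfloor>x\<rfloor> \<ge> 1" using f0 by (subst le_nat_iff) auto
  show "real (nat \<lfloor>x\<rfloor>) \<ge> x / 2"
  proof (cases "x \<ge> 2")
    case True then show ?thesis using e f1 by linarith
  next
    case False
    have "real_of_int \<lfloor>x\<rfloor> \<ge> 1" using f0 by simp
    then show ?thesis using e False by linarith
  qed
qed



lemma tpow_col_prob:
  assumes chan: "is_channel (m,n,W)" and z: "z < m^k"
  shows "prob_vec (n^k) (\<lambda>y. mat (tpow (m,n,W) k) y z)"
  by (rule col_prob_vec[OF is_channel_tpow[OF chan] z])

lemma lower_construction: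
  assumes chan: "is_channel (m,n,W)"
    and hle: "\<And>x. x < m \<Longrightarrow> h \<le> entropy n (\<lambda>y. W y x)"
    and h0: "h \<ge> 0" and dl: "\<delta> > 0"
  shows "\<exists>K. \<forall>k\<ge>K. \<exists>n' q. prob_vec n' q \<and> chan_maj (vec_chan n' q) (m^k, n^k, mat (tpow (m,n,W) k))
      \<and> (\<forall>x'<m^k. vec_maj n' q (n^k) (\<lambda>y. mat (tpow (m,n,W) k) y x'))
      \<and> entropy n' q \<ge> real k * (h - \<delta>) - 1"
proof (cases "h \<le> \<delta>")
  case True
  have "\<exists>n' q. prob_vec n' q \<and> chan_maj (vec_chan n' q) (m^k, n^k, mat (tpow (m,n,W) k))
      \<and> (\<forall>x'<m^k. vec_maj n' q (n^k) (\<lambda>y. mat (tpow (m,n,W) k) y x'))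
      \<and> entropy n' q \<ge> real k * (h - \<delta>) - 1" for k
  proof (intro exI conjI)
    show "prob_vec (n^k + 2) (\<lambda>i. if i = 0 then 1 else 0)" by (rule delta_prob)
    show "chan_maj (vec_chan (n^k + 2) (\<lambda>i. if i = 0 then 1 else 0)) (m^k, n^k, mat (tpow (m,n,W) k))"
    proof (rule chan_maj_from_DS[OF delta_prob])
      fix z assume z: "z < m^k"
      show "\<exists>D. dstoch (max (n ^ k + 2) (n ^ k)) D \<and> (\<forall>y<max (n ^ k + 2) (n ^ k).
         mat (tpow (m, n, W) k) y z = (\<Sum>y0<max (n ^ k + 2) (n ^ k). D y y0 * (if y0 = 0 then 1 else 0)))"
        by (rule delta_DS[OF tpow_col_prob[OF chan z]])
    next
      show "1 \<le> m^k" using is_channelD(1)[OF chan] by simp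
    qed
    show "\<forall>x'<m^k. vec_maj (n^k + 2) (\<lambda>i. if i = 0 then 1 else 0) (n^k) (\<lambda>y. mat (tpow (m,n,W) k) y x')"
      using delta_maj[OF tpow_col_prob[OF chan]] by blast
    have "real k * (h - \<delta>) \<le> 0" using True by (simp add: mult_nonneg_nonpos)
    then show "real k * (h - \<delta>) - 1 \<le> entropy (n^k + 2) (\<lambda>i. if i = 0 then 1 else 0)"
      using delta_entropy by simp
  qed
  then show ?thesis by blast
next
  case False
  then have hd: "h > \<delta>" by simp
  have m1: "m \<ge> 1" using is_channelD(1)[OF chan] .
  obtain t where t: "t > 0" and tb: "\<And>x. x < m \<Longrightarrow> (\<Sum>y<n. W y x powr (1 + t)) \<le> 2 powr (- (t * (h - \<delta>/4)))"
  proof -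
    have "\<exists>t>0. \<forall>x<m. (\<Sum>y<n. W y x powr (1 + t)) \<le> 2 powr (- (t * (h - \<delta>/4)))"
    proof (rule uniform_t[OF m1])
      fix x assume x: "x < m"
      obtain d where d: "d > 0" and dd: "\<And>t. 0 < t \<and> t < d \<Longrightarrow> (\<Sum>y<n. W y x powr (1 + t)) \<le> 2 powr (- (t * (entropy n (\<lambda>y. W y x) - \<delta>/4)))"
        using renyi_upper[OF col_prob_vec[OF chan x], of "\<delta>/4"] dl by auto
      show "\<exists>d>0. \<forall>t. 0 < t \<and> t < d \<longrightarrow> (\<Sum>y<n. W y x powr (1 + t)) \<le> 2 powr (- (t * (h - \<delta>/4)))"
      proof (intro exI[of _ d] conjI allI impI)
        fix t assume tt: "0 < t \<and> t < d"
        have "- (t * (entropy n (\<lambda>y. W y x) - \<delta>/4)) \<le> - (t * (h - \<delta>/4))"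
          using hle[OF x] tt by (simp add: mult_left_mono)
        then have "2 powr (- (t * (entropy n (\<lambda>y. W y x) - \<delta>/4))) \<le> 2 powr (- (t * (h - \<delta>/4)))" by simp
        then show "(\<Sum>y<n. W y x powr (1 + t)) \<le> 2 powr (- (t * (h - \<delta>/4)))" using dd[OF tt] by linarith
      qed (use d in auto)
    qed
    then show ?thesis using that by blast
  qed
  define e where "e = min (1/2) (\<delta> / (2 * (h + 1)))"
  have e0: "e > 0" "e \<le> 1/2"
  proof -
    show "e > 0" unfolding e_def using dl h0 by simp
    show "e \<le> 1/2" unfolding e_def by (rule min.cobounded1)
  qed
  have e2: "e * (h + 1) \<le> \<delta> / 2"
  proof -
    have "e \<le> \<delta> / (2 * (h + 1))" unfolding e_def by (rule min.cobounded2)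
    then have "e * (h + 1) \<le> \<delta> / (2 * (h + 1)) * (h + 1)" using h0 by (intro mult_right_mono) auto
    also have "\<dots> = \<delta> / 2" using h0 by (simp add: field_simps)
    finally show ?thesis .
  qed
  define a where "a = h - \<delta>/2"
  have a0: "a > 0" unfolding a_def using hd dl by simp
  obtain K where K: "\<And>k. k \<ge> K \<Longrightarrow> 4 powr t * 2 powr (- (t * \<delta> / 4 * real k)) \<le> e"
    using geo_ev[of "t * \<delta> / 4" e "4 powr t"] t dl e0 by auto
  have "\<exists>n' q. prob_vec n' q \<and> chan_maj (vec_chan n' q) (m^k, n^k, mat (tpow (m,n,W) k))
      \<and> (\<forall>x'<m^k. vec_maj n' q (n^k) (\<lambda>y. mat (tpow (m,n,W) k) y x'))
      \<and> entropy n' q \<ge> real k * (h - \<delta>) - 1" if k: "k \<ge> K" for k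
  proof -
    define X where "X = 2 powr (real k * a)"
    have X1: "X \<ge> 1" unfolding X_def using a0 by (intro ge_one_powr_ge_zero) auto
    define L where "L = nat \<lfloor>X\<rfloor>"
    have L1: "L \<ge> 1" and LX: "real L \<le> X" and LX2: "real L \<ge> X / 2" unfolding L_def using floor_half[OF X1] by auto
    define th where "th = (1 - e) / (L + 1)"
    have th0: "th > 0" unfolding th_def using e0 by simp
    have tail: "(\<Sum>y<n^k. if mat (tpow (m,n,W) k) y z > (1 - e) / (L + 1) then mat (tpow (m,n,W) k) y z else 0) \<le> e"
      if z: "z < m^k" for z
    proof -
      let ?c = "\<lambda>y. mat (tpow (m,n,W) k) y z"
      have cnn: "\<And>y. ?c y \<ge> 0" using is_channel_nonneg[OF is_channel_tpow[OF chan]] by blast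
      have "(\<Sum>y<n^k. if ?c y > th then ?c y else 0) \<le> th powr (- t) * (\<Sum>y<n^k. ?c y powr (1 + t))"
        by (rule markov_upper[OF cnn th0 t])
      also have "\<dots> \<le> th powr (- t) * (2 powr (- (t * (h - \<delta>/4)))) ^ k"
        by (intro mult_left_mono tpow_powsum[OF chan _ _ tb z]) (use t in auto)
      also have "th powr (- t) \<le> 4 powr t * X powr t"
      proof -
        have i: "(L + 1) / (1 - e) = 1 / th" unfolding th_def by simp
        have "th powr (- t) = ((L + 1) / (1 - e)) powr t"
          unfolding i powr_divide by (simp add: powr_minus divide_inverse)
        also have "\<dots> \<le> (4 * X) powr t"
        proof (intro powr_mono2)
          have "(L + 1) / (1 - e) \<le> (L + 1) / (1/2)"
            using e0 by (intro divide_left_mono) auto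
          also have "\<dots> \<le> (X + 1) * 2" using LX by simp
          finally have "(L + 1) / (1 - e) \<le> (X + 1) * 2" .
          also have "\<dots> \<le> 4 * X" using X1 by simp
          finally show "(L + 1) / (1 - e) \<le> 4 * X" .
        qed (use t e0 in auto)
        also have "\<dots> = 4 powr t * X powr t" by (simp add: powr_mult)
        finally show ?thesis .
      qed
      then have "th powr (- t) * (2 powr (- (t * (h - \<delta>/4)))) ^ k \<le> 4 powr t * X powr t * (2 powr (- (t * (h - \<delta>/4)))) ^ k"
        by (intro mult_right_mono) auto
      also have "\<dots> = 4 powr t * 2 powr (- (t * \<delta> / 4 * real k))"
      proof -
        have "(2 powr (- (t * (h - \<delta>/4)))) ^ k = (2 powr (- (t * (h - \<delta>/4)))) powr (real k)"
          by (rule powr_realpow[symmetric]) simp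
        also have "\<dots> = 2 powr (- (t * (h - \<delta>/4)) * real k)" by (rule powr_powr)
        finally have p1: "(2 powr (- (t * (h - \<delta>/4)))) ^ k = 2 powr (- (t * (h - \<delta>/4)) * real k)" .
        have p2: "X powr t = 2 powr (real k * a * t)" unfolding X_def by (rule powr_powr)
        have ex: "real k * a * t + (- (t * (h - \<delta>/4)) * real k) = - (t * \<delta> / 4 * real k)"
          unfolding a_def by (simp add: algebra_simps)
        have p3: "2 powr (real k * a * t) * 2 powr (- (t * (h - \<delta>/4)) * real k) = 2 powr (- (t * \<delta> / 4 * real k))"
          by (simp only: powr_add[symmetric] ex)
        show ?thesis unfolding p1 p2 using p3 by (simp add: mult.assoc)
      qed
      also have "\<dots> \<le> e" using K[OF k] .
      finally show ?thesis unfolding th_def by simp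
    qed
    have e1: "e < 1" using e0 by simp
    show ?thesis
    proof (intro exI conjI)
      show "prob_vec (L + 2 + n^k) (tlq e L)" by (rule tlq_prob[OF e0(1) e1 L1])
      show "chan_maj (vec_chan (L + 2 + n^k) (tlq e L)) (m^k, n^k, mat (tpow (m,n,W) k))"
      proof (rule chan_maj_from_DS[OF tlq_prob[OF e0(1) e1 L1]])
        fix z assume z: "z < m^k"
        show "\<exists>D. dstoch (max (L + 2 + n^k) (n ^ k)) D \<and> (\<forall>y<max (L + 2 + n^k) (n ^ k).
           mat (tpow (m, n, W) k) y z = (\<Sum>y0<max (L + 2 + n^k) (n ^ k). D y y0 * tlq e L y0))"
          by (rule two_level_DS[OF e0(1) e1 L1 tpow_col_prob[OF chan z] tail[OF z]])
      next
        show "1 \<le> m^k" using m1 by simp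
      qed
      show "\<forall>x'<m^k. vec_maj (L + 2 + n^k) (tlq e L) (n^k) (\<lambda>y. mat (tpow (m,n,W) k) y x')"
        using two_level_maj[OF e0(1) e1 L1 tpow_col_prob[OF chan] tail] by blast
      have lg: "log 2 L \<ge> real k * a - 1"
      proof -
        have "log 2 (X / 2) \<le> log 2 L" using LX2 X1 by (intro log_mono) auto
        moreover have "log 2 (X / 2) = real k * a - 1" unfolding X_def by (simp add: log_divide)
        ultimately show ?thesis by simp
      qed
      have "real k * (h - \<delta>) - 1 \<le> (1 - e) * (real k * a - 1)"
      proof -
        have "e * a \<le> e * (h + 1)" using e0 unfolding a_def using dl by (intro mult_left_mono) auto
        then have "e * a \<le> \<delta> / 2" using e2 by simp
        then have "real k * (e * a) \<le> real k * (\<delta> / 2)" by (intro mult_left_mono) auto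
        moreover have "real k * (h - \<delta>) = real k * a - real k * (\<delta>/2)" unfolding a_def by (simp add: algebra_simps)
        moreover have "(1 - e) * (real k * a - 1) = real k * a - 1 - real k * (e * a) + e" by (simp add: algebra_simps)
        ultimately show ?thesis using e0 by linarith
      qed
      also have "\<dots> \<le> (1 - e) * log 2 L" using lg e0 by (intro mult_left_mono) auto
      also have "\<dots> \<le> entropy (L + 2 + n^k) (tlq e L)" by (rule tlq_entropy[OF e0(1) e1 L1])
      finally show "real k * (h - \<delta>) - 1 \<le> entropy (L + 2 + n^k) (tlq e L)" .
    qed
  qed
  then show ?thesis by blast
qed



lemma upper_bound:
  assumes chan: "is_channel (m,n,W)" and xs: "xs < m" and hxs: "entropy n (\<lambda>y. W y xs) = h"
    and dl: "\<delta> > 0"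
  shows "\<exists>K. \<forall>k\<ge>K. \<forall>n' q. prob_vec n' q \<longrightarrow> (\<forall>x'<m^k. vec_maj n' q (n^k) (\<lambda>y. mat (tpow (m,n,W) k) y x'))
     \<longrightarrow> entropy n' q \<le> real k * (h + \<delta>) + 4"
proof -
  obtain d where d: "d > 0" and dd: "\<And>t. 0 < t \<and> t < d \<Longrightarrow> (\<Sum>y<n. W y xs powr (1 - t)) \<le> 2 powr (t * (h + \<delta>/4))"
    using renyi_lower[OF col_prob_vec[OF chan xs], of "\<delta>/4"] dl hxs by auto
  define t where "t = d / 2"
  have t: "t > 0" "t < d" unfolding t_def using d by auto
  have n1: "n \<ge> 1" using n_pos[OF chan] by simp
  have ln0: "log 2 n \<ge> 0" using n1 by simp
  define e where "e = min (1/2) (\<delta> / (2 * (log 2 n + 1)))"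
  have e0: "e > 0" "e \<le> 1/2"
  proof -
    show "e > 0" unfolding e_def using dl ln0 by simp
    show "e \<le> 1/2" unfolding e_def by (rule min.cobounded1)
  qed
  have e2: "e * log 2 n \<le> \<delta> / 2"
  proof -
    have "e \<le> \<delta> / (2 * (log 2 n + 1))" unfolding e_def by (rule min.cobounded2)
    then have "e * (log 2 n + 1) \<le> \<delta> / (2 * (log 2 n + 1)) * (log 2 n + 1)" using ln0 by (intro mult_right_mono) auto
    also have "\<dots> = \<delta> / 2" using ln0 by (simp add: field_simps)
    finally have "e * log 2 n + e \<le> \<delta> / 2" by (simp add: distrib_left)
    then show ?thesis using e0 by linarith
  qed
  obtain K where K: "\<And>k. k \<ge> K \<Longrightarrow> 1 * 2 powr (- (t * \<delta> / 4 * real k)) \<le> e"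
    using geo_ev[of "t * \<delta> / 4" e 1] t dl e0 by auto
  have "entropy n' q \<le> real k * (h + \<delta>) + 4"
    if k: "k \<ge> K" and q: "prob_vec n' q" and maj: "\<forall>x'<m^k. vec_maj n' q (n^k) (\<lambda>y. mat (tpow (m,n,W) k) y x')"
    for k n' q
  proof -
    define x where "x = idx m xs k"
    have x: "x < m^k" unfolding x_def by (rule idx_lt[OF xs])
    let ?c = "\<lambda>y. mat (tpow (m,n,W) k) y x"
    have c: "prob_vec (n^k) ?c" by (rule tpow_col_prob[OF chan x])
    have cnn: "\<And>y. ?c y \<ge> 0" using is_channel_nonneg[OF is_channel_tpow[OF chan]] by blast
    define th where "th = 2 powr (- (real k * (h + \<delta>/2)))"
    have th0: "th > 0" unfolding th_def by simp
    have tail: "(\<Sum>y<n^k. if ?c y < th then ?c y else 0) \<le> e"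
    proof -
      have "(\<Sum>y<n^k. if ?c y < th then ?c y else 0) \<le> th powr t * (\<Sum>y<n^k. ?c y powr (1 - t))"
        by (rule markov_lower[OF cnn th0 t(1)])
      also have "(\<Sum>y<n^k. ?c y powr (1 - t)) = (\<Sum>y<n. W y xs powr (1 - t)) ^ k"
        unfolding x_def by (rule tpow_powsum_idx[OF chan xs])
      also have "th powr t * \<dots> \<le> th powr t * (2 powr (t * (h + \<delta>/4))) ^ k"
        using dd[of t] t by (intro mult_left_mono power_mono) (auto intro!: sum_nonneg)
      also have "\<dots> = 2 powr (- (t * \<delta> / 4 * real k))"
      proof -
        have "(2 powr (t * (h + \<delta>/4))) ^ k = (2 powr (t * (h + \<delta>/4))) powr (real k)"
          by (rule powr_realpow[symmetric]) simp
        also have "\<dots> = 2 powr (t * (h + \<delta>/4) * real k)" by (rule powr_powr)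
        finally have p1: "(2 powr (t * (h + \<delta>/4))) ^ k = 2 powr (t * (h + \<delta>/4) * real k)" .
        have p2: "th powr t = 2 powr (- (real k * (h + \<delta>/2)) * t)" unfolding th_def by (rule powr_powr)
        have ex: "- (real k * (h + \<delta>/2)) * t + t * (h + \<delta>/4) * real k = - (t * \<delta> / 4 * real k)"
          by (simp add: algebra_simps)
        show ?thesis unfolding p1 p2 by (simp only: powr_add[symmetric] ex)
      qed
      also have "\<dots> \<le> e" using K[OF k] by simp
      finally show ?thesis .
    qed
    have e1: "e < 1" using e0 by simp
    have "entropy n' q \<le> log 2 (1 / th) + e * log 2 (real (n^k)) + 4"
      by (rule entropy_upper[OF c q maj[rule_format, OF x] th0 _ e1 tail]) (use e0 in simp)
    also have "log 2 (1 / th) = real k * (h + \<delta>/2)"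
    proof -
      have "1 / th = 2 powr (real k * (h + \<delta>/2))" unfolding th_def powr_minus by (simp only: divide_inverse mult_1_left inverse_inverse_eq)
      then show ?thesis by simp
    qed
    also have "log 2 (real (n^k)) = real k * log 2 n" using n1 by (simp add: log_nat_power)
    finally have E: "entropy n' q \<le> real k * (h + \<delta>/2) + e * (real k * log 2 n) + 4" .
    have "e * (real k * log 2 n) = real k * (e * log 2 n)" by simp
    also have "\<dots> \<le> real k * (\<delta> / 2)" using e2 by (intro mult_left_mono) auto
    finally have F: "e * (real k * log 2 n) \<le> real k * (\<delta> / 2)" .
    have G: "real k * (h + \<delta>/2) + real k * (\<delta> / 2) = real k * (h + \<delta>)" by (simp add: algebra_simps)
    show ?thesis using E F G by linarith
  qed
  then show ?thesis by blast
qed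



theorem theorem20:
  fixes HH :: "chan \<Rightarrow> real"
    and m n :: nat and W :: "nat \<Rightarrow> nat \<Rightarrow> real"
  assumes mono: "\<And>C1 C2. is_channel C1 \<Longrightarrow> is_channel C2 \<Longrightarrow> chan_maj C1 C2 \<Longrightarrow> HH C1 \<le> HH C2"
    and additive: "\<And>C1 C2. is_channel C1 \<Longrightarrow> is_channel C2 \<Longrightarrow> HH (tensor C1 C2) = HH C1 + HH C2"
    and norm: "\<And>k p. prob_vec k p \<Longrightarrow> HH (vec_chan k p) = entropy k p"
    and chan: "is_channel (m, n, W)"
  shows "HH (m, n, W) = Min ((\<lambda>x. entropy n (\<lambda>y. W y x)) ` {..<m})
       \<and> (\<lambda>k. Hmin (tpow (m, n, W) (Suc k)) / real (Suc k))
            \<longlonglongrightarrow> Min ((\<lambda>x. entropy n (\<lambda>y. W y x)) ` {..<m})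
       \<and> Hmax (m, n, W) = Min ((\<lambda>x. entropy n (\<lambda>y. W y x)) ` {..<m})"
proof -
  define h where "h = Min ((\<lambda>x. entropy n (\<lambda>y. W y x)) ` {..<m})"
  have m1: "m \<ge> 1" using is_channelD(1)[OF chan] .
  have "0 \<in> {..<m}" using m1 by simp
  then have ne: "(\<lambda>x. entropy n (\<lambda>y. W y x)) ` {..<m} \<noteq> {}" by blast
  have hle: "\<And>x. x < m \<Longrightarrow> h \<le> entropy n (\<lambda>y. W y x)" unfolding h_def by (intro Min_le) auto
  have "h \<in> (\<lambda>x. entropy n (\<lambda>y. W y x)) ` {..<m}" unfolding h_def using ne by (intro Min_in) auto
  then obtain xs where xs: "xs < m" and hxs: "entropy n (\<lambda>y. W y xs) = h" by auto
  have h0: "h \<ge> 0" unfolding hxs[symmetric]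
    by (rule entropy_nonneg) (use is_channel_nonneg[OF chan] is_channel_le1[OF chan] in auto)
  have pxs: "prob_vec n (\<lambda>y. W y xs)" by (rule col_prob_vec[OF chan xs])
  have HHup: "HH (m, n, W) \<le> h"
    using mono[OF chan prob_vec_chan[OF pxs] chan_maj_col[OF chan xs]] norm[OF pxs] hxs by simp
  have HHtp: "HH (m^k, n^k, mat (tpow (m,n,W) k)) = real k * HH (m,n,W)" for k
    using HH_tpow[OF additive norm chan, of k] tpow_shape[of m n W k] by simp
  have HHlo: "h \<le> HH (m, n, W)"
  proof (rule field_le_epsilon)
    fix d :: real assume d: "d > 0"
    obtain K where K: "\<And>k. k \<ge> K \<Longrightarrow> \<exists>n' q. prob_vec n' q \<and> chan_maj (vec_chan n' q) (m^k, n^k, mat (tpow (m,n,W) k))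
      \<and> (\<forall>x'<m^k. vec_maj n' q (n^k) (\<lambda>y. mat (tpow (m,n,W) k) y x'))
      \<and> entropy n' q \<ge> real k * (h - d/2) - 1"
      using lower_construction[OF chan hle h0, of "d/2"] d by auto
    define k where "k = max K (nat \<lceil>2 / d\<rceil> + 1)"
    have kK: "k \<ge> K" unfolding k_def by simp
    have k2: "real k \<ge> 2 / d" unfolding k_def by linarith
    have kpos: "real k > 0" unfolding k_def by simp
    obtain n' q where pq: "prob_vec n' q" and cm: "chan_maj (vec_chan n' q) (m^k, n^k, mat (tpow (m,n,W) k))"
      and ent: "entropy n' q \<ge> real k * (h - d/2) - 1" using K[OF kK] by blast
    have "entropy n' q \<le> real k * HH (m,n,W)"
      using mono[OF prob_vec_chan[OF pq] is_channel_tpow[OF chan] cm] norm[OF pq] HHtp[of k] by simp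
    then have "real k * (h - d/2) - 1 \<le> real k * HH (m,n,W)" using ent by simp
    moreover have "1 \<le> real k * (d / 2)" using k2 d by (simp add: field_simps)
    ultimately have "real k * h \<le> real k * (HH (m,n,W) + d)" by (simp add: algebra_simps)
    then show "h \<le> HH (m,n,W) + d" using kpos by simp
  qed
  have Hmax: "Hmax (m, n, W) = h"
    unfolding Hmax_def
  proof (rule cInf_eq_minimum)
    show "h \<in> {entropy n' q |n' q. prob_vec n' q \<and> chan_maj (m, n, W) (vec_chan n' q)}"
      using pxs chan_maj_col[OF chan xs] hxs by blast
    fix x assume "x \<in> {entropy n' q |n' q. prob_vec n' q \<and> chan_maj (m, n, W) (vec_chan n' q)}"
    then obtain n' q where "x = entropy n' q" "prob_vec n' q" "chan_maj (m, n, W) (vec_chan n' q)" by blast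
    then show "h \<le> x" using maj_entropy_lower[OF chan _ _ hle] by blast
  qed
  have lim: "(\<lambda>k. Hmin (tpow (m, n, W) (Suc k)) / real (Suc k)) \<longlonglongrightarrow> h"
  proof (rule LIMSEQ_I)
    fix r :: real assume r: "r > 0"
    define d where "d = r / 4"
    have d: "d > 0" unfolding d_def using r by simp
    obtain K1 where K1: "\<And>k. k \<ge> K1 \<Longrightarrow> \<exists>n' q. prob_vec n' q \<and> chan_maj (vec_chan n' q) (m^k, n^k, mat (tpow (m,n,W) k))
      \<and> (\<forall>x'<m^k. vec_maj n' q (n^k) (\<lambda>y. mat (tpow (m,n,W) k) y x'))
      \<and> entropy n' q \<ge> real k * (h - d) - 1"
      using lower_construction[OF chan hle h0 d] by auto
    obtain K2 where K2: "\<And>k n' q. k \<ge> K2 \<Longrightarrow> prob_vec n' q \<Longrightarrow> (\<forall>x'<m^k. vec_maj n' q (n^k) (\<lambda>y. mat (tpow (m,n,W) k) y x'))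
     \<Longrightarrow> entropy n' q \<le> real k * (h + d) + 4"
      using upper_bound[OF chan xs hxs d] by blast
    define N where "N = max K1 K2 + nat \<lceil>8 / r\<rceil>"
    have "norm (Hmin (tpow (m, n, W) (Suc k)) / real (Suc k) - h) < r" if k: "k \<ge> N" for k
    proof -
      define j where "j = Suc k"
      have jK1: "j \<ge> K1" and jK2: "j \<ge> K2" using k unfolding N_def j_def by auto
      have j8: "real j > 8 / r" unfolding j_def using k unfolding N_def by linarith
      have jpos: "real j > 0" unfolding j_def by simp
      define Y where "Y = {entropy n' q |n' q. prob_vec n' q \<and> (\<forall>x<m^j. vec_maj n' q (n^j) (\<lambda>y. mat (tpow (m,n,W) j) y x))}"
      have HY: "Hmin (tpow (m, n, W) j) = Sup Y"
        unfolding Y_def Hmin_def by (subst tpow_shape) simp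
      obtain n0 q0 where pq0: "prob_vec n0 q0" and mq0: "\<forall>x'<m^j. vec_maj n0 q0 (n^j) (\<lambda>y. mat (tpow (m,n,W) j) y x')"
        and e0: "entropy n0 q0 \<ge> real j * (h - d) - 1" using K1[OF jK1] by blast
      have inY: "entropy n0 q0 \<in> Y" unfolding Y_def using pq0 mq0 by blast
      have ub: "\<And>y. y \<in> Y \<Longrightarrow> y \<le> real j * (h + d) + 4" unfolding Y_def using K2[OF jK2] by blast
      have bdd: "bdd_above Y" using ub by (intro bdd_aboveI) blast
      have lo: "Sup Y \<ge> real j * (h - d) - 1" using cSup_upper[OF inY bdd] e0 by simp
      have up: "Sup Y \<le> real j * (h + d) + 4" using inY ub by (intro cSup_least) auto
      have "(real j * (h - d) - 1) / real j \<le> Sup Y / real j" using lo jpos by (intro divide_right_mono) auto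
      moreover have "(real j * (h - d) - 1) / real j = h - d - 1 / real j" using jpos by (simp add: field_simps)
      ultimately have A: "Sup Y / real j \<ge> h - d - 1 / real j" by simp
      have "Sup Y / real j \<le> (real j * (h + d) + 4) / real j" using up jpos by (intro divide_right_mono) auto
      moreover have "(real j * (h + d) + 4) / real j = h + d + 4 / real j" using jpos by (simp add: field_simps)
      ultimately have B: "Sup Y / real j \<le> h + d + 4 / real j" by simp
      note A B
      moreover have "4 / real j < r / 2" using j8 r jpos by (simp add: field_simps)
      moreover have "1 / real j < r / 2" using j8 r jpos by (simp add: field_simps)
      ultimately have "\<bar>Sup Y / real j - h\<bar> < r" unfolding d_def by (simp add: abs_less_iff)
      then show ?thesis using HY unfolding j_def by simp
    qed
    then show "\<exists>no. \<forall>k\<ge>no. norm (Hmin (tpow (m, n, W) (Suc k)) / real (Suc k) - h) < r" by blast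
  qed
  show ?thesis using HHup HHlo Hmax lim unfolding h_def[symmetric] by simp
qed


end
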